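(* Let $d\ge 3$ be odd. The abelianization $G_d/G_d'$ is isomorphic to $\mathbb Z^d$; more precisely, the elements $a_1^{i_1}a_2^{i_2}\cdots a_d^{i_d}$, $(i_1,\dots,i_d)\in\mathbb Z^d$, form a complete set of pairwise distinct coset representatives of $G_d'$ in $G_d$.
   Context: Let $d\ge 3$, $X=\{1,\dots,d\}$, $T$ the $d$-regular rooted tree with vertex set $X^*$. $\mathrm{Aut}(T)$ is the group of root-preserving automorphisms with product left-to-right: $(gh)(u)=h(g(u))$. Sections $g|_u$ are defined by $g(uv)=g(u)\,g|_u(v)$; we write $g=(g|_1,\dots,g|_d)\lambda_g$ with $\lambda_g\in S_d$ the action on the first level; $e$ is the identity; $\overline{j}\in\{1,\dots,d\}$ denotes $j$ mod $d$. $G_d=\langle a_1,\dots,a_d\rangle\le\mathrm{Aut}(T)$ where $a_i$ acts on the first level as $(i\ \overline{i+1})$, with $a_i|_i=a_i$, $a_i|_{\overline{i+1}}=a_{\overline{i+1}}$, and $a_i|_x=e$ otherwise. $G_d'$ denotes the commutator subgroup. *)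

theory Defs
  imports "HOL-Algebra.Algebra"
begin

text \<open>Alphabet X = {1..d}; vertices of the d-regular rooted tree T are the words in X^*,
  represented as nat lists all of whose letters lie in {1..d}.\<close>

definition alphabet :: "nat \<Rightarrow> nat set" where
  "alphabet d = {1..d}"

definition tree_vertices :: "nat \<Rightarrow> nat list set" where
  "tree_vertices d = lists (alphabet d)"

text \<open>nxt d j = the representative of j+1 mod d in {1..d} (for j in {1..d}).\<close>
definition nxt :: "nat \<Rightarrow> nat \<Rightarrow> nat" where
  "nxt d j = j mod d + 1"

text \<open>Root-preserving automorphisms of T: bijections of X^* that preserve word length and
  the prefix (parent/child) relation, as extensional functions on X^*.\<close>
definition tree_auts :: "nat \<Rightarrow> (nat list \<Rightarrow> nat list) set" where
  "tree_auts d = {f \<in> Bij (tree_vertices d).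
      (\<forall>u \<in> tree_vertices d. length (f u) = length u) \<and>
      (\<forall>u \<in> tree_vertices d. \<forall>v \<in> tree_vertices d. \<exists>w. f (u @ v) = f u @ w)}"

text \<open>Aut(T) with the left-to-right product (g h)(u) = h(g(u)).\<close>
definition AutT :: "nat \<Rightarrow> (nat list \<Rightarrow> nat list) monoid" where
  "AutT d = \<lparr>carrier = tree_auts d,
             monoid.mult = (\<lambda>g h. compose (tree_vertices d) h g),
             one = (\<lambda>u \<in> tree_vertices d. u)\<rparr>"

fun gen_act :: "nat \<Rightarrow> nat \<Rightarrow> nat list \<Rightarrow> nat list" where
  "gen_act d i [] = []"
| "gen_act d i (x # w) =
     (if x = i then nxt d i # gen_act d i w
      else if x = nxt d i then i # gen_act d (nxt d i) w
      else x # w)"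

definition gen :: "nat \<Rightarrow> nat \<Rightarrow> nat list \<Rightarrow> nat list" where
  "gen d i = restrict (gen_act d i) (tree_vertices d)"

definition Gd :: "nat \<Rightarrow> (nat list \<Rightarrow> nat list) monoid" where
  "Gd d = (AutT d)\<lparr>carrier := generate (AutT d) (gen d ` {1..d})\<rparr>"

definition Gd_comm :: "nat \<Rightarrow> (nat list \<Rightarrow> nat list) set" where
  "Gd_comm d = derived (Gd d) (carrier (Gd d))"

definition mono_word :: "nat \<Rightarrow> (nat \<Rightarrow> int) \<Rightarrow> nat list \<Rightarrow> nat list" where
  "mono_word d e = foldr (\<lambda>k acc. (gen d k [^]\<^bsub>Gd d\<^esub> e k) \<otimes>\<^bsub>Gd d\<^esub> acc) [1..<d+1] \<one>\<^bsub>Gd d\<^esub>"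

end

theory Submission
  imports Defs
begin


type_synonym letter = "nat \<times> bool"

fun inv_act :: "nat \<Rightarrow> nat \<Rightarrow> nat list \<Rightarrow> nat list" where
  "inv_act d i [] = []"
| "inv_act d i (x # w) =
     (if x = nxt d i then i # inv_act d i w
      else if x = i then nxt d i # inv_act d (nxt d i) w
      else x # w)"

fun letter_act :: "nat \<Rightarrow> letter \<Rightarrow> nat list \<Rightarrow> nat list" where
  "letter_act d (j, True) = gen_act d j"
| "letter_act d (j, False) = inv_act d j"

definition word_act :: "nat \<Rightarrow> letter list \<Rightarrow> nat list \<Rightarrow> nat list" where
  "word_act d w u = fold (letter_act d) w u"

fun step :: "nat \<Rightarrow> letter \<Rightarrow> nat \<Rightarrow> nat" where
  "step d (j, True) p = (if p = j then nxt d j else if p = nxt d j then j else p)"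
| "step d (j, False) p = (if p = nxt d j then j else if p = j then nxt d j else p)"

fun slet :: "nat \<Rightarrow> letter \<Rightarrow> nat \<Rightarrow> letter list" where
  "slet d (j, True) p = (if p = j then [(j, True)] else if p = nxt d j then [(nxt d j, True)] else [])"
| "slet d (j, False) p = (if p = nxt d j then [(j, False)] else if p = j then [(nxt d j, False)] else [])"

fun wsec :: "nat \<Rightarrow> letter list \<Rightarrow> nat \<Rightarrow> letter list" where
  "wsec d [] p = []"
| "wsec d (l # w) p = slet d l p @ wsec d w (step d l p)"

fun wend :: "nat \<Rightarrow> letter list \<Rightarrow> nat \<Rightarrow> nat" where
  "wend d [] p = p"
| "wend d (l # w) p = wend d w (step d l p)"

definition cnt :: "letter list \<Rightarrow> nat \<Rightarrow> int" where
  "cnt w k = sum_list (map (\<lambda>(j, b). if j = k then (if b then 1 else -1) else 0) w)"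

definition valid :: "nat \<Rightarrow> letter list \<Rightarrow> bool" where
  "valid d w = (\<forall>l \<in> set w. fst l \<in> {1..d})"

definition Triv :: "nat \<Rightarrow> letter list \<Rightarrow> bool" where
  "Triv d w = (\<forall>u \<in> lists {1..d}. word_act d w u = u)"

definition nz :: "nat \<Rightarrow> letter list \<Rightarrow> bool" where
  "nz d w = (\<exists>k \<in> {1..d}. cnt w k \<noteq> 0)"

fun flipl :: "letter \<Rightarrow> letter" where "flipl (j, b) = (j, \<not> b)"

definition winv :: "letter list \<Rightarrow> letter list" where
  "winv w = rev (map flipl w)"

lemma word_act_Nil[simp]: "word_act d [] u = u" by (simp add: word_act_def)
lemma word_act_Cons[simp]: "word_act d (l # w) u = word_act d w (letter_act d l u)"
  by (simp add: word_act_def)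
lemma word_act_append[simp]: "word_act d (a @ b) u = word_act d b (word_act d a u)"
  by (simp add: word_act_def)

lemma cnt_Nil[simp]: "cnt [] k = 0" by (simp add: cnt_def)
lemma cnt_Cons[simp]: "cnt (l # w) k = (if fst l = k then (if snd l then 1 else -1) else 0) + cnt w k"
  by (cases l) (simp add: cnt_def)
lemma cnt_append[simp]: "cnt (a @ b) k = cnt a k + cnt b k"
  by (simp add: cnt_def)

lemma wsec_append[simp]: "wsec d (a @ b) p = wsec d a p @ wsec d b (wend d a p)"
  by (induction a arbitrary: p) auto
lemma wend_append[simp]: "wend d (a @ b) p = wend d b (wend d a p)"
  by (induction a arbitrary: p) auto

lemma letter_act_Cons:
  "letter_act d l (x # u) = step d l x # word_act d (slet d l x) u"
  by (cases l; cases "snd l") auto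

lemma word_act_Cons_vertex:
  "word_act d w (x # u) = wend d w x # word_act d (wsec d w x) u"
  by (induction w arbitrary: x u) (auto simp: letter_act_Cons)

lemma nxt_range: "0 < d \<Longrightarrow> nxt d j \<in> {1..d}"
  by (simp add: nxt_def) (meson Suc_leI mod_less_divisor)


lemma nxt_eq: "j \<in> {1..d} \<Longrightarrow> nxt d j = (if j = d then 1 else j + 1)"
  by (auto simp: nxt_def)

lemma nxt_neq: "3 \<le> d \<Longrightarrow> j \<in> {1..d} \<Longrightarrow> nxt d j \<noteq> j"
  by (auto simp: nxt_eq)

lemma nxt_nxt_neq: "3 \<le> d \<Longrightarrow> j \<in> {1..d} \<Longrightarrow> nxt d (nxt d j) \<noteq> j"
proof -
  assume a: "3 \<le> d" "j \<in> {1..d}"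
  show ?thesis
  proof (cases "j = d")
    case True
    have "1 \<in> {1..d}" using a by auto
    then have "nxt d 1 = 2" using a by (simp add: nxt_eq)
    then show ?thesis using a True by (simp add: nxt_eq)
  next
    case False
    then have e: "nxt d j = j + 1" using a by (simp add: nxt_eq)
    have "j + 1 \<in> {1..d}" using a False by auto
    then have "nxt d (j+1) = (if j + 1 = d then 1 else j + 2)" by (simp add: nxt_eq)
    then show ?thesis using e a by auto
  qed
qed

lemma inv_gen: "3 \<le> d \<Longrightarrow> j \<in> {1..d} \<Longrightarrow> u \<in> lists {1..d} \<Longrightarrow> inv_act d j (gen_act d j u) = u"
proof (induction u arbitrary: j)
  case (Cons x u)
  then show ?case using nxt_neq[of d j] nxt_range[of d j] by auto
qed simp

lemma gen_inv: "3 \<le> d \<Longrightarrow> j \<in> {1..d} \<Longrightarrow> u \<in> lists {1..d} \<Longrightarrow> gen_act d j (inv_act d j u) = u"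
proof (induction u arbitrary: j)
  case (Cons x u)
  then show ?case using nxt_neq[of d j] nxt_range[of d j] by auto
qed simp

lemma gen_lists: "3 \<le> d \<Longrightarrow> j \<in> {1..d} \<Longrightarrow> u \<in> lists {1..d} \<Longrightarrow> gen_act d j u \<in> lists {1..d}"
proof (induction u arbitrary: j)
  case (Cons x u)
  then show ?case using nxt_range[of d j] by auto
qed simp

lemma inv_lists: "3 \<le> d \<Longrightarrow> j \<in> {1..d} \<Longrightarrow> u \<in> lists {1..d} \<Longrightarrow> inv_act d j u \<in> lists {1..d}"
proof (induction u arbitrary: j)
  case (Cons x u)
  then show ?case using nxt_range[of d j] by auto
qed simp

lemma gen_length: "length (gen_act d j u) = length u"
  by (induction u arbitrary: j) auto
lemma inv_length: "length (inv_act d j u) = length u"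
  by (induction u arbitrary: j) auto

lemma gen_prefix: "\<exists>w. gen_act d j (u @ v) = gen_act d j u @ w"
  by (induction u arbitrary: j) auto
lemma inv_prefix: "\<exists>w. inv_act d j (u @ v) = inv_act d j u @ w"
  by (induction u arbitrary: j) auto

lemma letter_inv: "3 \<le> d \<Longrightarrow> fst l \<in> {1..d} \<Longrightarrow> u \<in> lists {1..d} \<Longrightarrow>
   letter_act d (flipl l) (letter_act d l u) = u"
  by (cases l; cases "snd l") (auto simp: inv_gen gen_inv)

lemma letter_lists: "3 \<le> d \<Longrightarrow> fst l \<in> {1..d} \<Longrightarrow> u \<in> lists {1..d} \<Longrightarrow>
   letter_act d l u \<in> lists {1..d}"
  using gen_lists[of d "fst l" u] inv_lists[of d "fst l" u] by (cases l; cases "snd l") auto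

lemma letter_length: "length (letter_act d l u) = length u"
  by (cases l; cases "snd l") (auto simp: gen_length inv_length)

lemma letter_prefix: "\<exists>w. letter_act d l (u @ v) = letter_act d l u @ w"
  by (cases l; cases "snd l") (auto simp: gen_prefix inv_prefix)

lemma flipl_flipl[simp]: "flipl (flipl l) = l" by (cases l) auto
lemma fst_flipl[simp]: "fst (flipl l) = fst l" by (cases l) auto
lemma snd_flipl[simp]: "snd (flipl l) = (\<not> snd l)" by (cases l) auto

lemma valid_Cons[simp]: "valid d (l # w) = (fst l \<in> {1..d} \<and> valid d w)"
  by (auto simp: valid_def)
lemma valid_append[simp]: "valid d (a @ b) = (valid d a \<and> valid d b)"
  by (auto simp: valid_def)
lemma valid_Nil[simp]: "valid d []" by (simp add: valid_def)

lemma winv_Nil[simp]: "winv [] = []" by (simp add: winv_def)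
lemma winv_Cons[simp]: "winv (l # w) = winv w @ [flipl l]" by (simp add: winv_def)
lemma winv_append[simp]: "winv (a @ b) = winv b @ winv a" by (simp add: winv_def)
lemma winv_winv[simp]: "winv (winv w) = w" by (simp add: winv_def rev_map comp_def)
lemma valid_winv[simp]: "valid d (winv w) = valid d w"
  by (induction w) auto
lemma length_winv[simp]: "length (winv w) = length w" by (simp add: winv_def)
lemma cnt_winv[simp]: "cnt (winv w) k = - cnt w k"
  by (induction w) (auto)

lemma word_lists: "3 \<le> d \<Longrightarrow> valid d w \<Longrightarrow> u \<in> lists {1..d} \<Longrightarrow> word_act d w u \<in> lists {1..d}"
proof (induction w arbitrary: u)
  case (Cons l w)
  have "letter_act d l u \<in> lists {1..d}" using Cons.prems letter_lists[of d l u] by simp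
  then show ?case using Cons by simp
qed simp

lemma word_length: "length (word_act d w u) = length u"
  by (induction w arbitrary: u) (auto simp: letter_length)

lemma word_prefix: "\<exists>x. word_act d w (u @ v) = word_act d w u @ x"
proof (induction w arbitrary: u v)
  case (Cons l w)
  obtain y where "letter_act d l (u @ v) = letter_act d l u @ y" using letter_prefix by blast
  then show ?case using Cons by auto
qed simp

lemma word_inv1: "3 \<le> d \<Longrightarrow> valid d w \<Longrightarrow> u \<in> lists {1..d} \<Longrightarrow>
   word_act d (winv w) (word_act d w u) = u"
proof (induction w arbitrary: u)
  case (Cons l w)
  have "letter_act d l u \<in> lists {1..d}" using Cons.prems letter_lists[of d l u] by simp
  then have "word_act d (winv w) (word_act d w (letter_act d l u)) = letter_act d l u"
    using Cons by simp
  then show ?case using Cons.prems letter_inv[of d l u] by simp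
qed simp

lemma word_inv2: "3 \<le> d \<Longrightarrow> valid d w \<Longrightarrow> u \<in> lists {1..d} \<Longrightarrow>
   word_act d w (word_act d (winv w) u) = u"
  using word_inv1[of d "winv w" u] by simp

lemma Triv_winv: "3 \<le> d \<Longrightarrow> valid d w \<Longrightarrow> Triv d w \<Longrightarrow> Triv d (winv w)"
  unfolding Triv_def by (metis word_inv1)

lemma step_range: "3 \<le> d \<Longrightarrow> fst l \<in> {1..d} \<Longrightarrow> p \<in> {1..d} \<Longrightarrow> step d l p \<in> {1..d}"
proof -
  assume a: "3 \<le> d" "fst l \<in> {1..d}" "p \<in> {1..d}"
  obtain j b where l: "l = (j, b)" by (cases l)
  have "nxt d j \<in> {1..d}" using a by (intro nxt_range) auto
  then show ?thesis using a l by (cases b) simp_all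
qed

lemma step_invol: "3 \<le> d \<Longrightarrow> fst l \<in> {1..d} \<Longrightarrow> p \<in> {1..d} \<Longrightarrow> step d l (step d l p) = p"
proof -
  assume a: "3 \<le> d" "fst l \<in> {1..d}" "p \<in> {1..d}"
  obtain j b where l: "l = (j, b)" by (cases l)
  have "nxt d j \<noteq> j" using a l nxt_neq by auto
  then show ?thesis using l by (cases b) simp_all
qed

lemma slet_valid: "3 \<le> d \<Longrightarrow> fst l \<in> {1..d} \<Longrightarrow> valid d (slet d l p)"
proof -
  assume a: "3 \<le> d" "fst l \<in> {1..d}"
  obtain j b where l: "l = (j, b)" by (cases l)
  have "nxt d j \<in> {1..d}" using a by (intro nxt_range) auto
  then show ?thesis using a l by (cases b) (simp_all add: valid_def)
qed

lemma wend_range: "3 \<le> d \<Longrightarrow> valid d w \<Longrightarrow> p \<in> {1..d} \<Longrightarrow> wend d w p \<in> {1..d}"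
proof (induction w arbitrary: p)
  case (Cons l w)
  have "step d l p \<in> {1..d}" using Cons.prems by (intro step_range) auto
  then show ?case using Cons.IH Cons.prems by simp
qed simp

lemma wsec_valid: "3 \<le> d \<Longrightarrow> valid d w \<Longrightarrow> valid d (wsec d w p)"
proof (induction w arbitrary: p)
  case (Cons l w)
  have "valid d (slet d l p)" using Cons.prems by (intro slet_valid) auto
  then show ?case using Cons.IH Cons.prems by simp
qed simp

lemma slet_len: "length (slet d l p) \<le> 1"
  by (cases l; cases "snd l") auto

lemma wsec_len: "length (wsec d w p) \<le> length w"
proof (induction w arbitrary: p)
  case (Cons l w)
  have "length (wsec d w (step d l p)) \<le> length w" by (rule Cons.IH)
  with slet_len[of d l p] show ?case by simp
qed simp

lemma slet_pos: "snd l \<Longrightarrow> x \<in> set (slet d l p) \<Longrightarrow> snd x"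
  by (cases l; cases "snd l") (auto split: if_splits)

lemma wsec_pos: "\<forall>l\<in>set w. snd l \<Longrightarrow> \<forall>x \<in> set (wsec d w p). snd x"
  by (induction w arbitrary: p) (auto dest: slet_pos)

lemma Triv_sec: assumes "3 \<le> d" "Triv d w" "x \<in> {1..d}"
  shows "wend d w x = x" "Triv d (wsec d w x)"
proof -
  have "word_act d w [x] = [x]" using assms unfolding Triv_def by auto
  then show "wend d w x = x" by (simp add: word_act_Cons_vertex)
  show "Triv d (wsec d w x)" unfolding Triv_def
  proof
    fix u assume "u \<in> lists {1..d}"
    then have "word_act d w (x # u) = x # u" using assms unfolding Triv_def by auto
    then show "word_act d (wsec d w x) u = u" by (simp add: word_act_Cons_vertex)
  qed
qed



definition prv :: "nat \<Rightarrow> nat \<Rightarrow> nat" where "prv d k = (if k = 1 then d else k - 1)"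

lemma nxt_prv: "j \<in> {1..d} \<Longrightarrow> k \<in> {1..d} \<Longrightarrow> (nxt d j = k) = (j = prv d k)"
  by (simp add: nxt_eq prv_def) arith

lemma sum_slet:
  assumes "3 \<le> d" "j \<in> {1..d}"
  shows "(\<Sum>x\<in>{1..d}. cnt (slet d (j, b) x) k) =
     (if b then 1 else -1) * ((if j = k then 1 else 0) + (if nxt d j = k then 1 else 0))"
proof -
  have ne: "nxt d j \<noteq> j" using assms nxt_neq by blast
  have nr: "nxt d j \<in> {1..d}" using assms by (intro nxt_range) auto
  have "(\<Sum>x\<in>{1..d}. cnt (slet d (j, b) x) k) = (\<Sum>x\<in>{j, nxt d j}. cnt (slet d (j, b) x) k)"
  proof (rule sum.mono_neutral_right)
    show "{j, nxt d j} \<subseteq> {1..d}" using assms nr by blast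
    show "\<forall>i\<in>{1..d} - {j, nxt d j}. cnt (slet d (j, b) i) k = 0" by (cases b) auto
  qed simp
  also have "\<dots> = cnt (slet d (j, b) j) k + cnt (slet d (j, b) (nxt d j)) k"
    using ne by simp
  also have "\<dots> = (if b then 1 else -1) * ((if j = k then 1 else 0) + (if nxt d j = k then 1 else 0))"
    using ne by (cases b) auto
  finally show ?thesis .
qed

lemma sum_step_reindex:
  assumes "3 \<le> d" "fst l \<in> {1..d}"
  shows "(\<Sum>x\<in>{1..d}. g (step d l x)) = (\<Sum>x\<in>{1..d}. (g x :: int))"
  by (rule sum.reindex_bij_witness[where i="step d l" and j="step d l"])
     (use assms step_invol step_range in auto)

lemma sum_sec:
  assumes "3 \<le> d" "valid d w" "k \<in> {1..d}"
  shows "(\<Sum>x\<in>{1..d}. cnt (wsec d w x) k) = cnt w k + cnt w (prv d k)"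
  using assms(2)
proof (induction w)
  case Nil
  then show ?case by simp
next
  case (Cons l w)
  obtain j b where l: "l = (j, b)" by (cases l)
  have j: "j \<in> {1..d}" using Cons.prems l by simp
  have "(\<Sum>x\<in>{1..d}. cnt (wsec d (l # w) x) k) =
        (\<Sum>x\<in>{1..d}. cnt (slet d l x) k) + (\<Sum>x\<in>{1..d}. cnt (wsec d w (step d l x)) k)"
    by (simp add: sum.distrib)
  also have "(\<Sum>x\<in>{1..d}. cnt (wsec d w (step d l x)) k) = (\<Sum>x\<in>{1..d}. cnt (wsec d w x) k)"
    using sum_step_reindex[of d l "\<lambda>x. cnt (wsec d w x) k"] assms j l by simp
  also have "\<dots> = cnt w k + cnt w (prv d k)" using Cons by simp
  also have "(\<Sum>x\<in>{1..d}. cnt (slet d l x) k) =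
     (if b then 1 else -1) * ((if j = k then 1 else 0) + (if nxt d j = k then 1 else 0))"
    using sum_slet[OF assms(1) j] l by simp
  also have "(if nxt d j = k then 1 else 0) = (if j = prv d k then 1 else (0::int))"
    using nxt_prv[OF j assms(3)] by simp
  finally show ?case using l by (cases b) auto
qed

lemma Minj:
  assumes "odd d" "\<forall>k\<in>{1..d}. c k + c (prv d k) = (0::int)" "k \<in> {1..d}"
  shows "c k = 0"
proof -
  have h: "1 \<le> k \<Longrightarrow> k \<le> d \<Longrightarrow> c k = (-1) ^ (k - 1) * c 1" for k
  proof (induction k)
    case 0
    then show ?case by simp
  next
    case (Suc m)
    show ?case
    proof (cases "m = 0")
      case True
      then show ?thesis by simp
    next
      case False
      then obtain m' where m: "m = Suc m'" by (cases m) auto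
      have "prv d (Suc m) = m" using False by (simp add: prv_def)
      moreover have "Suc m \<in> {1..d}" using Suc.prems by simp
      then have "c (Suc m) + c (prv d (Suc m)) = 0" using assms(2) by blast
      ultimately have e1: "c (Suc m) = - c m" by simp
      have "c m = (-1) ^ m' * c 1" using Suc.IH Suc.prems m by simp
      then show ?thesis using e1 m by simp
    qed
  qed
  have d1: "1 \<le> d" using assms(1) by (cases d) auto
  have "c d = (-1) ^ (d - 1) * c 1" using h[of d] d1 by simp
  moreover have "even (d - 1)" using assms(1) d1 by simp
  then have "(-1::int) ^ (d - 1) = 1" by simp
  ultimately have cd: "c d = c 1" by simp
  have "1 \<in> {1..d}" using d1 by simp
  then have "c 1 + c (prv d 1) = 0" using assms(2) by blast
  then have c1: "c 1 = 0" using cd by (simp add: prv_def)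
  have "c k = (-1) ^ (k - 1) * c 1" using h[of k] assms(3) by simp
  then show ?thesis using c1 by simp
qed

lemma exists_sec:
  assumes "3 \<le> d" "odd d" "valid d w" "nz d w"
  shows "\<exists>x\<in>{1..d}. nz d (wsec d w x)"
proof (rule ccontr)
  assume "\<not> ?thesis"
  then have z: "\<forall>x\<in>{1..d}. \<forall>k\<in>{1..d}. cnt (wsec d w x) k = 0" by (auto simp: nz_def)
  have "\<forall>k\<in>{1..d}. cnt w k + cnt w (prv d k) = 0"
  proof
    fix k assume k: "k \<in> {1..d}"
    have "(\<Sum>x\<in>{1..d}. cnt (wsec d w x) k) = 0" using z k by simp
    then show "cnt w k + cnt w (prv d k) = 0" using sum_sec[OF assms(1,3) k] by simp
  qed
  then have "\<forall>k\<in>{1..d}. cnt w k = 0" using Minj[OF assms(2)] by blast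
  then show False using assms(4) by (auto simp: nz_def)
qed

definition mincx :: "nat \<Rightarrow> nat \<Rightarrow> bool" where
  "mincx d L = (\<forall>w'. length w' < L \<longrightarrow> valid d w' \<longrightarrow> Triv d w' \<longrightarrow> \<not> nz d w')"

lemma full_sec:
  assumes "3 \<le> d" "mincx d (length w)" "valid d w" "Triv d w" "x \<in> {1..d}" "nz d (wsec d w x)"
  shows "length (wsec d w x) = length w"
proof -
  have "valid d (wsec d w x)" using assms wsec_valid by blast
  moreover have "Triv d (wsec d w x)" using assms Triv_sec by blast
  ultimately have "\<not> length (wsec d w x) < length w" using assms(2,6) unfolding mincx_def by blast
  then show ?thesis using wsec_len[of d w x] by simp
qed

lemma adj_Triv:
  assumes "3 \<le> d" "valid d (a @ [l, flipl l] @ b)" "Triv d (a @ [l, flipl l] @ b)"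
  shows "Triv d (a @ b)"
  unfolding Triv_def
proof
  fix u assume u: "u \<in> lists {1..d}"
  have "word_act d a u \<in> lists {1..d}" using assms u word_lists by simp
  then have "letter_act d (flipl l) (letter_act d l (word_act d a u)) = word_act d a u"
    using assms letter_inv by simp
  then show "word_act d (a @ b) u = u" using assms(3) u unfolding Triv_def by force
qed

lemma wrap_Triv:
  assumes "3 \<le> d" "valid d ([l] @ m @ [flipl l])" "Triv d ([l] @ m @ [flipl l])"
  shows "Triv d m"
  unfolding Triv_def
proof
  fix y assume y: "y \<in> lists {1..d}"
  have lv: "fst l \<in> {1..d}" and mv: "valid d m" using assms by auto
  define z where "z = letter_act d (flipl l) y"
  have z: "z \<in> lists {1..d}" unfolding z_def using letter_lists[of d "flipl l" y] lv y assms by simp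
  have lz: "letter_act d l z = y" unfolding z_def using letter_inv[of d "flipl l" y] lv y assms by simp
  have "word_act d ([l] @ m @ [flipl l]) z = z" using assms(3) z unfolding Triv_def by blast
  then have e: "letter_act d (flipl l) (word_act d m y) = letter_act d (flipl l) y"
    using lz z_def by simp
  have wy: "word_act d m y \<in> lists {1..d}" using word_lists assms mv y by blast
  have "word_act d m y = letter_act d l (letter_act d (flipl l) (word_act d m y))"
    using letter_inv[of d "flipl l" "word_act d m y"] lv wy assms by simp
  also have "\<dots> = letter_act d l (letter_act d (flipl l) y)" using e by simp
  also have "\<dots> = y" using letter_inv[of d "flipl l" y] lv y assms by simp
  finally show "word_act d m y = y" .
qed

lemma cnt_flip_pair: "cnt [l, flipl l] k = 0"
  by (cases l) auto

lemma cycred: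
  assumes "3 \<le> d" "mincx d (length u)" "valid d u" "Triv d u" "nz d u"
  shows "\<And>a l b. u \<noteq> a @ [l, flipl l] @ b" and "\<And>l m. u \<noteq> [l] @ m @ [flipl l]"
proof -
  fix a l b
  show "u \<noteq> a @ [l, flipl l] @ b"
  proof
    assume u: "u = a @ [l, flipl l] @ b"
    have "Triv d (a @ b)" using adj_Triv assms u by blast
    moreover have "valid d (a @ b)" using assms u by simp
    moreover have "nz d (a @ b)"
    proof -
      have "cnt u k = cnt (a @ b) k" for k using u cnt_flip_pair[of l k] by simp
      then show ?thesis using assms(5) by (simp add: nz_def)
    qed
    moreover have "length (a @ b) < length u" using u by simp
    ultimately show False using assms(2) unfolding mincx_def by blast
  qed
next
  fix l m
  show "u \<noteq> [l] @ m @ [flipl l]"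
  proof
    assume u: "u = [l] @ m @ [flipl l]"
    have "Triv d m" using wrap_Triv assms u by blast
    moreover have "valid d m" using assms u by simp
    moreover have "nz d m"
    proof -
      have "cnt u k = cnt m k" for k using u by (cases l) auto
      then show ?thesis using assms(5) by (simp add: nz_def)
    qed
    moreover have "length m < length u" using u by simp
    ultimately show False using assms(2) unfolding mincx_def by blast
  qed
qed

lemma full_Cons:
  assumes "length (wsec d (l # w) p) = length (l # w)"
  shows "slet d l p \<noteq> []" "length (wsec d w (step d l p)) = length w"
  using assms slet_len[of d l p] wsec_len[of d w "step d l p"] by (cases "slet d l p"; simp)+

lemma full_app:
  assumes "length (wsec d (a @ b) p) = length (a @ b)"
  shows "length (wsec d a p) = length a" "length (wsec d b (wend d a p)) = length b"
  using assms wsec_len[of d a p] wsec_len[of d b "wend d a p"] by simp_all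

lemma slet_T: "slet d l p \<noteq> [] \<Longrightarrow> snd l \<Longrightarrow> slet d l p = [(p, True)]"
  by (cases l; cases "snd l") (auto split: if_splits)

lemma slet_F: "slet d l p \<noteq> [] \<Longrightarrow> \<not> snd l \<Longrightarrow> slet d l p = [(step d l p, False)]"
  by (cases l; cases "snd l") (auto split: if_splits)

lemma FT_sec:
  assumes full: "length (wsec d w x) = length w"
    and w: "w = a @ [l1, l2] @ b" and s: "\<not> snd l1" "snd l2"
  shows "\<exists>a' l b'. wsec d w x = a' @ [l, flipl l] @ b'"
proof -
  define p where "p = wend d a x"
  have f1: "length (wsec d ([l1, l2] @ b) p) = length ([l1, l2] @ b)"
    using full_app(2)[of d a "[l1,l2] @ b" x] full w p_def by simp
  then have n1: "slet d l1 p \<noteq> []" using full_Cons(1)[of d l1 "l2 # b" p] by simp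
  have f2: "length (wsec d (l2 # b) (step d l1 p)) = length (l2 # b)"
    using full_Cons(2)[of d l1 "l2 # b" p] f1 by simp
  then have n2: "slet d l2 (step d l1 p) \<noteq> []" using full_Cons(1) by blast
  have e1: "slet d l1 p = [(step d l1 p, False)]" using slet_F n1 s by blast
  have e2: "slet d l2 (step d l1 p) = [(step d l1 p, True)]" using slet_T n2 s by blast
  have "wsec d w x = wsec d a x @ [(step d l1 p, False), flipl (step d l1 p, False)]
        @ wsec d b (step d l2 (step d l1 p))"
    using w e1 e2 p_def by simp
  then show ?thesis by blast
qed

lemma wrap_sec:
  assumes full: "length (wsec d w x) = length w" and we: "wend d w x = x"
    and w: "w = [l1] @ m @ [l2]" and s: "snd l1" "\<not> snd l2"
  shows "\<exists>m'. wsec d w x = [(x, True)] @ m' @ [flipl (x, True)]"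
proof -
  have n1: "slet d l1 x \<noteq> []" using full_Cons(1)[of d l1 "m @ [l2]" x] full w by simp
  define r where "r = wend d m (step d l1 x)"
  have "length (wsec d (([l1] @ m) @ [l2]) x) = length (([l1] @ m) @ [l2])" using full w by simp
  then have "length (wsec d [l2] (wend d ([l1] @ m) x)) = length [l2]" by (rule full_app(2))
  then have n2: "slet d l2 r \<noteq> []" using full_Cons(1)[of d l2 "[]"] r_def by simp
  have e1: "slet d l1 x = [(x, True)]" using slet_T n1 s by blast
  have e2: "slet d l2 r = [(step d l2 r, False)]" using slet_F n2 s by blast
  have "step d l2 r = x" using we w r_def by simp
  then have "wsec d w x = [(x, True)] @ wsec d m (step d l1 x) @ [flipl (x, True)]"
    using w e1 e2 r_def by simp
  then show ?thesis by blast
qed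

lemma signsA: "\<not> snd l \<Longrightarrow> \<exists>t\<in>set w. snd t \<Longrightarrow>
   \<exists>a l1 l2 b. l # w = a @ [l1, l2] @ b \<and> \<not> snd l1 \<and> snd l2"
proof (induction w arbitrary: l)
  case Nil
  then show ?case by simp
next
  case (Cons t w)
  show ?case
  proof (cases "snd t")
    case True
    then have "l # t # w = [] @ [l, t] @ w \<and> \<not> snd l \<and> snd t" using Cons by simp
    then show ?thesis by blast
  next
    case False
    then have "\<exists>t'\<in>set w. snd t'" using Cons.prems by auto
    then obtain a l1 l2 b where "t # w = a @ [l1, l2] @ b \<and> \<not> snd l1 \<and> snd l2"
      using Cons.IH False by blast
    then have "l # t # w = (l # a) @ [l1, l2] @ b \<and> \<not> snd l1 \<and> snd l2" by simp
    then show ?thesis by blast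
  qed
qed

lemma signsB: "\<exists>f\<in>set w. \<not> snd f \<Longrightarrow> w \<noteq> [] \<Longrightarrow> snd (last w) \<Longrightarrow>
   \<exists>a l1 l2 b. w = a @ [l1, l2] @ b \<and> \<not> snd l1 \<and> snd l2"
proof (induction w)
  case Nil
  then show ?case by simp
next
  case (Cons l w)
  show ?case
  proof (cases "w = []")
    case True
    then show ?thesis using Cons.prems by auto
  next
    case False
    then have lw: "snd (last w)" using Cons.prems by simp
    show ?thesis
    proof (cases "\<exists>f\<in>set w. \<not> snd f")
      case True
      then obtain a l1 l2 b where "w = a @ [l1, l2] @ b \<and> \<not> snd l1 \<and> snd l2"
        using Cons.IH False lw by blast
      then have "l # w = (l # a) @ [l1, l2] @ b \<and> \<not> snd l1 \<and> snd l2" by simp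
      then show ?thesis by blast
    next
      case nf: False
      then have "\<not> snd l" using Cons.prems by auto
      moreover obtain t w' where "w = t # w'" using False by (cases w) auto
      moreover have "snd t" using nf \<open>w = t # w'\<close> by auto
      ultimately have "l # w = [] @ [l, t] @ w' \<and> \<not> snd l \<and> snd t" by simp
      then show ?thesis by blast
    qed
  qed
qed

lemma signs:
  assumes "\<exists>t\<in>set w. snd t" "\<exists>f\<in>set w. \<not> snd f"
  shows "(\<exists>a l1 l2 b. w = a @ [l1, l2] @ b \<and> \<not> snd l1 \<and> snd l2) \<or>
         (\<exists>l1 m l2. w = [l1] @ m @ [l2] \<and> snd l1 \<and> \<not> snd l2)"
proof (cases "\<exists>a l1 l2 b. w = a @ [l1, l2] @ b \<and> \<not> snd l1 \<and> snd l2")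
  case True
  then show ?thesis by blast
next
  case False
  obtain l w' where w: "w = l # w'" using assms by (cases w) auto
  have sl: "snd l"
  proof (rule ccontr)
    assume nl: "\<not> snd l"
    then have "\<exists>t\<in>set w'. snd t" using assms(1) w by auto
    then show False using signsA[of l w'] nl False w by blast
  qed
  have w'ne: "w' \<noteq> []" using assms w sl by auto
  have "\<not> snd (last w)"
  proof
    assume "snd (last w)"
    then show False using signsB[of w] False assms(2) w by blast
  qed
  then have "\<not> snd (last w')" using w w'ne by simp
  moreover have "w = [l] @ butlast w' @ [last w']" using w w'ne by simp
  ultimately show ?thesis using sl by blast
qed



lemma cnt_pos_nonneg: "\<forall>l\<in>set w. snd l \<Longrightarrow> cnt w k \<ge> 0"
  by (induction w) auto

lemma pos_nz: assumes "valid d w" "w \<noteq> []" "\<forall>l\<in>set w. snd l" shows "nz d w"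
proof -
  obtain l w' where w: "w = l # w'" using assms by (cases w) auto
  have "cnt w' (fst l) \<ge> 0" using assms w cnt_pos_nonneg by simp
  then have "cnt w (fst l) \<noteq> 0" using assms w by simp
  moreover have "fst l \<in> {1..d}" using assms w by simp
  ultimately show ?thesis unfolding nz_def by blast
qed

lemma letter_act_Nil[simp]: "letter_act d l [] = []"
  by (cases l; cases "snd l") auto

lemma word_act_Nil_vertex[simp]: "word_act d w [] = []"
  by (induction w) auto

lemma single_nontriv: assumes "3 \<le> d" "fst l \<in> {1..d}" shows "\<not> Triv d [l]"
proof
  assume t: "Triv d [l]"
  obtain j b where l: "l = (j, b)" by (cases l)
  have j: "j \<in> {1..d}" using assms l by simp
  have "[j] \<in> lists {1..d}" using j by simp
  then have "word_act d [l] [j] = [j]" using t unfolding Triv_def by blast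
  then have "step d l j = j" by (simp add: letter_act_Cons)
  moreover have "nxt d j \<noteq> j" using nxt_neq assms j by blast
  ultimately show False using l by (cases b) auto
qed

lemma step_moves: "3 \<le> d \<Longrightarrow> fst l \<in> {1..d} \<Longrightarrow> slet d l p \<noteq> [] \<Longrightarrow> step d l p \<noteq> p"
proof -
  assume a: "3 \<le> d" "fst l \<in> {1..d}" "slet d l p \<noteq> []"
  obtain j b where l: "l = (j, b)" by (cases l)
  have "nxt d j \<noteq> j" using nxt_neq a l by auto
  then show ?thesis using a l by (cases b) (auto split: if_splits)
qed

lemma slet_ne_T: "slet d (j, True) p \<noteq> [] \<Longrightarrow> p = j \<or> p = nxt d j"
  by (auto split: if_splits)

lemma positive_contra:
  assumes d: "3 \<le> d" "odd d" and mc: "mincx d (length w)" and v: "valid d w" and t: "Triv d w"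
    and n: "nz d w" and pos: "\<forall>l\<in>set w. snd l"
  shows False
proof -
  obtain x where x: "x \<in> {1..d}" "nz d (wsec d w x)" using exists_sec d v n by blast
  define u where "u = wsec d w x"
  have fu: "length u = length w" unfolding u_def using full_sec d mc v t x by blast
  have uv: "valid d u" unfolding u_def using wsec_valid d v by blast
  have ut: "Triv d u" unfolding u_def using Triv_sec d t x by blast
  have up: "\<forall>l\<in>set u. snd l" unfolding u_def using wsec_pos pos by blast
  have "w \<noteq> []" using n by (auto simp: nz_def)
  moreover have "\<And>l. w \<noteq> [l]" using single_nontriv d t v by auto
  ultimately obtain l1 l2 r where w: "w = l1 # l2 # r"
    by (metis list.exhaust)
  have fw: "length (wsec d (l1 # l2 # r) x) = length (l1 # l2 # r)" using fu w u_def by simp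
  have s1: "slet d l1 x \<noteq> []" using full_Cons(1)[OF fw] .
  define x1 where "x1 = step d l1 x"
  have fw2: "length (wsec d (l2 # r) x1) = length (l2 # r)" using full_Cons(2)[OF fw] x1_def by simp
  have s2: "slet d l2 x1 \<noteq> []" using full_Cons(1)[OF fw2] .
  have l1v: "fst l1 \<in> {1..d}" and l2v: "fst l2 \<in> {1..d}" using v w by auto
  have x1x: "x1 \<noteq> x" unfolding x1_def using step_moves d l1v s1 by blast
  have x1r: "x1 \<in> {1..d}" unfolding x1_def using step_range d l1v x by blast
  have e1: "slet d l1 x = [(x, True)]" using slet_T s1 pos w by simp
  have e2: "slet d l2 x1 = [(x1, True)]" using slet_T s2 pos w by simp
  have u: "u = (x, True) # (x1, True) # wsec d r (step d l2 x1)"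
    unfolding u_def using w e1 e2 x1_def by simp
  have mcu: "mincx d (length u)" using mc fu by simp
  have nx: "nxt d x \<noteq> x" using nxt_neq d x by blast
  have nxr: "nxt d x \<in> {1..d}" using nxt_range d by simp
  have A: "nxt d x = x1 \<or> nxt d x = nxt d x1"
  proof -
    have ne: "wsec d u x \<noteq> []" using u by simp
    have "nz d (wsec d u x)"
      using pos_nz[OF wsec_valid[OF d(1) uv] ne wsec_pos[OF up]] .
    then have f: "length (wsec d u x) = length u" using full_sec d mcu uv ut x by blast
    have f2: "length (wsec d ((x1, True) # wsec d r (step d l2 x1)) (step d (x, True) x))
        = length ((x1, True) # wsec d r (step d l2 x1))"
      using full_Cons(2)[of d "(x, True)"] f u by simp
    have "slet d (x1, True) (nxt d x) \<noteq> []" using full_Cons(1)[OF f2] by simp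
    then show ?thesis using slet_ne_T by blast
  qed
  have B: "x = x1 \<or> x = nxt d x1"
  proof -
    have sl: "slet d (x, True) (nxt d x) = [(nxt d x, True)]" using nx by simp
    have ne: "wsec d u (nxt d x) \<noteq> []" using u sl by simp
    have "nz d (wsec d u (nxt d x))"
      using pos_nz[OF wsec_valid[OF d(1) uv] ne wsec_pos[OF up]] .
    then have f: "length (wsec d u (nxt d x)) = length u" using full_sec d mcu uv ut nxr by blast
    have f': "length (wsec d ((x, True) # (x1, True) # wsec d r (step d l2 x1)) (nxt d x))
        = length ((x, True) # (x1, True) # wsec d r (step d l2 x1))" using f by (simp only: u)
    have f2: "length (wsec d ((x1, True) # wsec d r (step d l2 x1)) (step d (x, True) (nxt d x)))
        = length ((x1, True) # wsec d r (step d l2 x1))"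
      by (rule full_Cons(2)[OF f'])
    have st: "step d (x, True) (nxt d x) = x" using nx by simp
    have "slet d (x1, True) (step d (x, True) (nxt d x)) \<noteq> []" by (rule full_Cons(1)[OF f2])
    then have "slet d (x1, True) x \<noteq> []" using st by metis
    then show ?thesis using slet_ne_T by blast
  qed
  have xe: "x = nxt d x1" using B x1x by simp
  show False
  proof (cases "nxt d x = x1")
    case True
    then have "nxt d (nxt d x1) = x1" using xe by simp
    then show False using nxt_nxt_neq d x1r by blast
  next
    case False
    then have "nxt d x = x" using A xe by simp
    then show False using nx by simp
  qed
qed

lemma set_winv: "set (winv w) = flipl ` set w" by (simp add: winv_def)

theorem triv_zero:
  assumes "3 \<le> d" "odd d" "valid d w" "Triv d w"
  shows "\<not> nz d w"
  using assms(3,4)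
proof (induction "length w" arbitrary: w rule: less_induct)
  case less
  have mc: "mincx d (length w)" unfolding mincx_def using less.hyps by blast
  show ?case
  proof
    assume n: "nz d w"
    obtain x where x: "x \<in> {1..d}" "nz d (wsec d w x)" using exists_sec assms(1,2) less.prems n by blast
    define u where "u = wsec d w x"
    have fu: "length u = length w" unfolding u_def using full_sec assms(1) mc less.prems x by blast
    have we: "wend d w x = x" using Triv_sec assms(1) less.prems x by blast
    have uv: "valid d u" unfolding u_def using wsec_valid assms(1) less.prems by blast
    have ut: "Triv d u" unfolding u_def using Triv_sec assms(1) less.prems x by blast
    have mcu: "mincx d (length u)" using mc fu by simp
    have cr1: "\<And>a l b. u \<noteq> a @ [l, flipl l] @ b" and cr2: "\<And>l m. u \<noteq> [l] @ m @ [flipl l]"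
      using cycred[OF assms(1) mcu uv ut] x u_def by auto
    have fuw: "length (wsec d w x) = length w" using fu u_def by simp
    consider (P) "\<forall>l\<in>set w. snd l" | (N) "\<forall>l\<in>set w. \<not> snd l"
      | (B) "\<exists>t\<in>set w. snd t" "\<exists>f\<in>set w. \<not> snd f" by blast
    then show False
    proof cases
      case P
      then show False using positive_contra assms(1,2) mc less.prems n by blast
    next
      case N
      have "valid d (winv w)" using less.prems by simp
      moreover have "Triv d (winv w)" using Triv_winv assms(1) less.prems by blast
      moreover have "nz d (winv w)" using n by (simp add: nz_def)
      moreover have "\<forall>l\<in>set (winv w). snd l" using N by (auto simp: set_winv)
      moreover have "mincx d (length (winv w))" using mc by simp
      ultimately show False using positive_contra assms(1,2) by blast
    next
      case B
      from signs[OF B] show False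
      proof
        assume "\<exists>a l1 l2 b. w = a @ [l1, l2] @ b \<and> \<not> snd l1 \<and> snd l2"
        then obtain a l1 l2 b where "w = a @ [l1, l2] @ b" "\<not> snd l1" "snd l2" by blast
        then obtain a' l b' where "wsec d w x = a' @ [l, flipl l] @ b'" using FT_sec fuw by blast
        then show False using cr1 u_def by blast
      next
        assume "\<exists>l1 m l2. w = [l1] @ m @ [l2] \<and> snd l1 \<and> \<not> snd l2"
        then obtain l1 m l2 where "w = [l1] @ m @ [l2]" "snd l1" "\<not> snd l2" by blast
        then obtain m' where "wsec d w x = [(x, True)] @ m' @ [flipl (x, True)]"
          using wrap_sec fuw we by blast
        then show False using cr2 u_def by blast
      qed
    qed
  qed
qed



lemma tv: "tree_vertices d = lists {1..d}"
  by (simp add: tree_vertices_def alphabet_def)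

definition evalF :: "nat \<Rightarrow> letter list \<Rightarrow> nat list \<Rightarrow> nat list" where
  "evalF d w = restrict (word_act d w) (tree_vertices d)"

lemma tree_autsI:
  assumes "f \<in> extensional (lists {1..d})" "bij_betw f (lists {1..d}) (lists {1..d})"
    "\<And>u. u \<in> lists {1..d} \<Longrightarrow> length (f u) = length u"
    "\<And>u v. u \<in> lists {1..d} \<Longrightarrow> v \<in> lists {1..d} \<Longrightarrow> \<exists>w. f (u @ v) = f u @ w"
  shows "f \<in> tree_auts d"
  using assms unfolding tree_auts_def tv Bij_def by blast

lemma tree_autsD:
  assumes "f \<in> tree_auts d"
  shows "f \<in> extensional (lists {1..d})" "bij_betw f (lists {1..d}) (lists {1..d})"
    "\<And>u. u \<in> lists {1..d} \<Longrightarrow> length (f u) = length u"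
    "\<And>u v. u \<in> lists {1..d} \<Longrightarrow> v \<in> lists {1..d} \<Longrightarrow> \<exists>w. f (u @ v) = f u @ w"
  using assms unfolding tree_auts_def tv Bij_def by blast+

lemma tree_auts_funcset: "f \<in> tree_auts d \<Longrightarrow> f \<in> lists {1..d} \<rightarrow> lists {1..d}"
  using tree_autsD(2) bij_betw_imp_funcset by blast

lemma evalF_tree_auts:
  assumes d: "3 \<le> d" and v: "valid d w"
  shows "evalF d w \<in> tree_auts d"
proof (rule tree_autsI)
  show "evalF d w \<in> extensional (lists {1..d})" unfolding evalF_def tv by simp
  show "bij_betw (evalF d w) (lists {1..d}) (lists {1..d})"
  proof (rule bij_betw_byWitness[where f'="word_act d (winv w)"])
    show "\<forall>a\<in>lists {1..d}. word_act d (winv w) (evalF d w a) = a"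
      unfolding evalF_def tv using word_inv1 d v by simp
    show "\<forall>a'\<in>lists {1..d}. evalF d w (word_act d (winv w) a') = a'"
      unfolding evalF_def tv using word_inv2 word_lists d v valid_winv by simp
    show "evalF d w ` lists {1..d} \<subseteq> lists {1..d}"
      unfolding evalF_def tv using word_lists d v by auto
    show "word_act d (winv w) ` lists {1..d} \<subseteq> lists {1..d}"
      using word_lists[of d "winv w"] d v by auto
  qed
  show "length (evalF d w u) = length u" if "u \<in> lists {1..d}" for u
    using that unfolding evalF_def tv by (simp add: word_length)
  show "\<exists>x. evalF d w (u @ v) = evalF d w u @ x" if "u \<in> lists {1..d}" "v \<in> lists {1..d}" for u v
    using that word_prefix[of d w u v] unfolding evalF_def tv by simp
qed

lemma AutT_simps[simp]:
  "carrier (AutT d) = tree_auts d"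
  "x \<otimes>\<^bsub>AutT d\<^esub> y = compose (tree_vertices d) y x"
  "\<one>\<^bsub>AutT d\<^esub> = (\<lambda>u\<in>tree_vertices d. u)"
  by (simp_all add: AutT_def)

lemma monoid_AutT: "monoid (AutT d)"
proof (rule monoidI)
  fix x y assume x: "x \<in> carrier (AutT d)" and y: "y \<in> carrier (AutT d)"
  have xt: "x \<in> tree_auts d" and yt: "y \<in> tree_auts d" using x y by auto
  have xf: "x \<in> lists {1..d} \<rightarrow> lists {1..d}" using tree_auts_funcset xt by blast
  have "compose (lists {1..d}) y x \<in> tree_auts d"
  proof (rule tree_autsI)
    show "compose (lists {1..d}) y x \<in> extensional (lists {1..d})" by (simp add: compose_def)
    show "bij_betw (compose (lists {1..d}) y x) (lists {1..d}) (lists {1..d})"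
      using bij_betw_compose[OF tree_autsD(2)[OF xt] tree_autsD(2)[OF yt]]
      by (simp add: compose_def)
    show "length (compose (lists {1..d}) y x u) = length u" if "u \<in> lists {1..d}" for u
    proof -
      have "x u \<in> lists {1..d}" using xf that by blast
      then show ?thesis using that tree_autsD(3)[OF xt] tree_autsD(3)[OF yt] by (simp add: compose_eq)
    qed
    show "\<exists>w. compose (lists {1..d}) y x (u @ v) = compose (lists {1..d}) y x u @ w"
      if uv: "u \<in> lists {1..d}" "v \<in> lists {1..d}" for u v
    proof -
      obtain w1 where w1: "x (u @ v) = x u @ w1" using tree_autsD(4)[OF xt uv] by blast
      have "u @ v \<in> lists {1..d}" using uv by simp
      then have "x (u @ v) \<in> lists {1..d}" using xf by blast
      then have xu: "x u \<in> lists {1..d}" and w1l: "w1 \<in> lists {1..d}" using w1 by auto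
      obtain w2 where w2: "y (x u @ w1) = y (x u) @ w2" using tree_autsD(4)[OF yt xu w1l] by blast
      have "u @ v \<in> lists {1..d}" using uv by simp
      then have "compose (lists {1..d}) y x (u @ v) = y (x u) @ w2" using w1 w2 by (simp add: compose_eq)
      moreover have "compose (lists {1..d}) y x u = y (x u)" using uv by (simp add: compose_eq)
      ultimately show ?thesis by metis
    qed
  qed
  then show "x \<otimes>\<^bsub>AutT d\<^esub> y \<in> carrier (AutT d)" by (simp add: tv)
next
  have "(\<lambda>u\<in>lists {1..d}. u) \<in> tree_auts d"
    by (rule tree_autsI) (auto simp: bij_betw_def inj_on_def)
  then show "\<one>\<^bsub>AutT d\<^esub> \<in> carrier (AutT d)" by (simp add: tv)
next
  fix x y z assume x: "x \<in> carrier (AutT d)" and y: "y \<in> carrier (AutT d)" and z: "z \<in> carrier (AutT d)"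
  have "x \<in> lists {1..d} \<rightarrow> lists {1..d}" using tree_auts_funcset x by simp
  moreover have "y \<in> lists {1..d} \<rightarrow> lists {1..d}" using tree_auts_funcset y by simp
  ultimately show "x \<otimes>\<^bsub>AutT d\<^esub> y \<otimes>\<^bsub>AutT d\<^esub> z = x \<otimes>\<^bsub>AutT d\<^esub> (y \<otimes>\<^bsub>AutT d\<^esub> z)"
    by (simp add: tv compose_assoc)
next
  fix x assume x: "x \<in> carrier (AutT d)"
  then have "x \<in> lists {1..d} \<rightarrow> lists {1..d}" "x \<in> extensional (lists {1..d})"
    using tree_auts_funcset tree_autsD(1) by auto
  then show "\<one>\<^bsub>AutT d\<^esub> \<otimes>\<^bsub>AutT d\<^esub> x = x" "x \<otimes>\<^bsub>AutT d\<^esub> \<one>\<^bsub>AutT d\<^esub> = x"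
    by (simp_all add: tv)
qed



lemma evalF_eqI: "(\<And>u. u \<in> lists {1..d} \<Longrightarrow> word_act d w u = f u) \<Longrightarrow>
   evalF d w = restrict f (tree_vertices d)"
  unfolding evalF_def tv by (rule restrict_ext) simp

lemma evalF_append:
  assumes "3 \<le> d" "valid d a"
  shows "evalF d (a @ b) = evalF d a \<otimes>\<^bsub>AutT d\<^esub> evalF d b"
proof -
  have wl: "\<And>u. u \<in> lists {1..d} \<Longrightarrow> word_act d a u \<in> lists {1..d}" using word_lists assms by blast
  have "evalF d (a @ b) = restrict (\<lambda>u. evalF d b (evalF d a u)) (tree_vertices d)"
  proof (rule evalF_eqI)
    fix u assume u: "u \<in> lists {1..d}"
    have "word_act d a u \<in> lists {1..d}" by (rule wl[OF u])
    then show "word_act d (a @ b) u = evalF d b (evalF d a u)" using u by (simp add: evalF_def tv)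
  qed
  then show ?thesis by (simp add: compose_def)
qed

lemma evalF_Nil: "evalF d [] = \<one>\<^bsub>AutT d\<^esub>"
  by (simp add: evalF_eqI)

lemma evalF_gen: "evalF d [(j, True)] = gen d j"
  unfolding gen_def by (rule evalF_eqI) simp

lemma evalF_winv1: "3 \<le> d \<Longrightarrow> valid d w \<Longrightarrow> evalF d (w @ winv w) = \<one>\<^bsub>AutT d\<^esub>"
proof -
  assume a: "3 \<le> d" "valid d w"
  have "evalF d (w @ winv w) = restrict (\<lambda>u. u) (tree_vertices d)"
    by (rule evalF_eqI) (simp add: word_inv1 a)
  then show ?thesis by simp
qed

lemma evalF_winv2: "3 \<le> d \<Longrightarrow> valid d w \<Longrightarrow> evalF d (winv w @ w) = \<one>\<^bsub>AutT d\<^esub>"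
proof -
  assume a: "3 \<le> d" "valid d w"
  have "evalF d (winv w @ w) = restrict (\<lambda>u. u) (tree_vertices d)"
    by (rule evalF_eqI) (simp add: word_inv2 a)
  then show ?thesis by simp
qed

lemma evalF_carrier: "3 \<le> d \<Longrightarrow> valid d w \<Longrightarrow> evalF d w \<in> carrier (AutT d)"
  using evalF_tree_auts by simp

lemma inv_evalF:
  assumes "3 \<le> d" "valid d w"
  shows "inv\<^bsub>AutT d\<^esub> (evalF d w) = evalF d (winv w)"
proof -
  have "evalF d (winv w) = inv\<^bsub>AutT d\<^esub> (evalF d w)"
  proof (rule monoid.inv_unique'[OF monoid_AutT])
    show "evalF d w \<in> carrier (AutT d)" "evalF d (winv w) \<in> carrier (AutT d)"
      using evalF_carrier assms by auto
    show "evalF d w \<otimes>\<^bsub>AutT d\<^esub> evalF d (winv w) = \<one>\<^bsub>AutT d\<^esub>"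
      using evalF_append[of d w "winv w"] evalF_winv1 assms by simp
    show "evalF d (winv w) \<otimes>\<^bsub>AutT d\<^esub> evalF d w = \<one>\<^bsub>AutT d\<^esub>"
      using evalF_append[of d "winv w" w] evalF_winv2 assms by simp
  qed
  then show ?thesis by simp
qed

lemma gen_set:
  assumes d: "3 \<le> d"
  shows "generate (AutT d) (gen d ` {1..d}) = {evalF d w | w. valid d w}"
proof
  show "generate (AutT d) (gen d ` {1..d}) \<subseteq> {evalF d w | w. valid d w}"
  proof
    fix g assume "g \<in> generate (AutT d) (gen d ` {1..d})"
    then show "g \<in> {evalF d w | w. valid d w}"
    proof induction
      case one
      have "evalF d [] = \<one>\<^bsub>AutT d\<^esub>" by (rule evalF_Nil)
      have "valid d []" by simp
      then show ?case using \<open>evalF d [] = \<one>\<^bsub>AutT d\<^esub>\<close> by (metis (mono_tags, lifting) mem_Collect_eq)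
    next
      case (incl h)
      then obtain j where j: "j \<in> {1..d}" "h = gen d j" by blast
      have "h = evalF d [(j, True)]" using j(2) evalF_gen by metis
      moreover have "valid d [(j, True)]" using j(1) by simp
      ultimately show ?case by blast
    next
      case (inv h)
      then obtain j where j: "j \<in> {1..d}" "h = gen d j" by blast
      have v: "valid d [(j, True)]" using j by simp
      have "inv\<^bsub>AutT d\<^esub> h = evalF d (winv [(j, True)])"
        using inv_evalF[OF d v] j by (simp add: evalF_gen)
      moreover have "valid d (winv [(j, True)])" using v by simp
      ultimately show ?case by blast
    next
      case (eng h1 h2)
      then obtain w1 w2 where w: "h1 = evalF d w1" "valid d w1" "h2 = evalF d w2" "valid d w2" by blast
      then have "h1 \<otimes>\<^bsub>AutT d\<^esub> h2 = evalF d (w1 @ w2)" using evalF_append d by simp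
      moreover have "valid d (w1 @ w2)" using w by simp
      ultimately show ?case by blast
    qed
  qed
next
  show "{evalF d w | w. valid d w} \<subseteq> generate (AutT d) (gen d ` {1..d})"
  proof
    fix g assume "g \<in> {evalF d w | w. valid d w}"
    then obtain w where g: "g = evalF d w" and v: "valid d w" by blast
    have "evalF d w \<in> generate (AutT d) (gen d ` {1..d})" using v
    proof (induction w)
      case Nil
      then show ?case using generate.one evalF_Nil by metis
    next
      case (Cons l w)
      obtain j b where l: "l = (j, b)" by (cases l)
      have j: "j \<in> {1..d}" using Cons.prems l by simp
      have "evalF d [l] \<in> generate (AutT d) (gen d ` {1..d})"
      proof (cases b)
        case True
        then show ?thesis using l evalF_gen generate.incl[OF imageI[OF j]] by simp
      next
        case False
        have "inv\<^bsub>AutT d\<^esub> (gen d j) = evalF d [(j, False)]"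
          using inv_evalF[of d "[(j, True)]"] d j by (simp add: evalF_gen)
        moreover have "inv\<^bsub>AutT d\<^esub> (gen d j) \<in> generate (AutT d) (gen d ` {1..d})"
          by (rule generate.inv[OF imageI[OF j]])
        ultimately show ?thesis using l False by simp
      qed
      moreover have "evalF d (l # w) = evalF d [l] \<otimes>\<^bsub>AutT d\<^esub> evalF d w"
        using evalF_append[of d "[l]" w] d Cons.prems by simp
      moreover have "evalF d w \<in> generate (AutT d) (gen d ` {1..d})" using Cons by simp
      ultimately show ?case using generate.eng by metis
    qed
    then show "g \<in> generate (AutT d) (gen d ` {1..d})" using g by simp
  qed
qed

lemma Gd_simps[simp]:
  "carrier (Gd d) = generate (AutT d) (gen d ` {1..d})"
  "x \<otimes>\<^bsub>Gd d\<^esub> y = x \<otimes>\<^bsub>AutT d\<^esub> y"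
  "\<one>\<^bsub>Gd d\<^esub> = \<one>\<^bsub>AutT d\<^esub>"
  by (simp_all add: Gd_def)

lemma carrier_Gd: "3 \<le> d \<Longrightarrow> carrier (Gd d) = {evalF d w | w. valid d w}"
  using gen_set by simp

lemma group_Gd:
  assumes d: "3 \<le> d"
  shows "group (Gd d)"
proof (rule groupI)
  fix x y assume "x \<in> carrier (Gd d)" "y \<in> carrier (Gd d)"
  then show "x \<otimes>\<^bsub>Gd d\<^esub> y \<in> carrier (Gd d)" by (simp only: Gd_simps) (rule generate.eng)
next
  show "\<one>\<^bsub>Gd d\<^esub> \<in> carrier (Gd d)" by (simp only: Gd_simps) (rule generate.one)
next
  fix x y z assume "x \<in> carrier (Gd d)" "y \<in> carrier (Gd d)" "z \<in> carrier (Gd d)"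
  then have "x \<in> carrier (AutT d)" "y \<in> carrier (AutT d)" "z \<in> carrier (AutT d)"
    using carrier_Gd[OF d] evalF_carrier[OF d] by auto
  then show "x \<otimes>\<^bsub>Gd d\<^esub> y \<otimes>\<^bsub>Gd d\<^esub> z = x \<otimes>\<^bsub>Gd d\<^esub> (y \<otimes>\<^bsub>Gd d\<^esub> z)"
    using monoid.m_assoc[OF monoid_AutT] by simp
next
  fix x assume "x \<in> carrier (Gd d)"
  then have "x \<in> carrier (AutT d)" using carrier_Gd[OF d] evalF_carrier[OF d] by auto
  then show "\<one>\<^bsub>Gd d\<^esub> \<otimes>\<^bsub>Gd d\<^esub> x = x" using monoid.l_one[OF monoid_AutT] by simp
next
  fix x assume "x \<in> carrier (Gd d)"
  then obtain w where x: "x = evalF d w" and v: "valid d w" using carrier_Gd[OF d] by auto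
  have "evalF d (winv w) \<in> carrier (Gd d)" using carrier_Gd[OF d] v by auto
  moreover have "evalF d (winv w) \<otimes>\<^bsub>Gd d\<^esub> x = \<one>\<^bsub>Gd d\<^esub>"
    using evalF_append[of d "winv w" w] evalF_winv2[OF d v] x v d by simp
  ultimately show "\<exists>y\<in>carrier (Gd d). y \<otimes>\<^bsub>Gd d\<^esub> x = \<one>\<^bsub>Gd d\<^esub>" by blast
qed



lemma evalF_Gd: "3 \<le> d \<Longrightarrow> valid d w \<Longrightarrow> evalF d w \<in> carrier (Gd d)"
  using carrier_Gd by blast

lemma mult_Gd_evalF: "3 \<le> d \<Longrightarrow> valid d a \<Longrightarrow> evalF d a \<otimes>\<^bsub>Gd d\<^esub> evalF d b = evalF d (a @ b)"
  using evalF_append by simp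

lemma one_Gd: "\<one>\<^bsub>Gd d\<^esub> = evalF d []"
  using evalF_Nil by simp

lemma inv_Gd_evalF:
  assumes "3 \<le> d" "valid d w"
  shows "inv\<^bsub>Gd d\<^esub> (evalF d w) = evalF d (winv w)"
proof (rule group.inv_equality[OF group_Gd[OF assms(1)]])
  show "evalF d (winv w) \<otimes>\<^bsub>Gd d\<^esub> evalF d w = \<one>\<^bsub>Gd d\<^esub>"
    using mult_Gd_evalF[of d "winv w" w] evalF_winv2 assms by simp
  show "evalF d w \<in> carrier (Gd d)" "evalF d (winv w) \<in> carrier (Gd d)" using evalF_Gd assms by auto
qed

definition pw :: "nat \<Rightarrow> int \<Rightarrow> letter list" where
  "pw k n = (if 0 \<le> n then replicate (nat n) (k, True) else replicate (nat (- n)) (k, False))"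

lemma winv_replicate: "winv (replicate m l) = replicate m (flipl l)"
  by (simp add: winv_def)

lemma pow_gen_nat:
  assumes "3 \<le> d" "k \<in> {1..d}"
  shows "gen d k [^]\<^bsub>Gd d\<^esub> (m::nat) = evalF d (replicate m (k, True))"
proof (induction m)
  case 0
  have "gen d k [^]\<^bsub>Gd d\<^esub> (0::nat) = \<one>\<^bsub>Gd d\<^esub>" by (rule monoid.nat_pow_0[OF group.is_monoid[OF group_Gd[OF assms(1)]]])
  then show ?case by (simp only: one_Gd replicate_0)
next
  case (Suc m)
  have "gen d k [^]\<^bsub>Gd d\<^esub> Suc m = gen d k [^]\<^bsub>Gd d\<^esub> m \<otimes>\<^bsub>Gd d\<^esub> gen d k"
    using monoid.nat_pow_Suc[OF group.is_monoid[OF group_Gd[OF assms(1)]]] by blast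
  also have "\<dots> = evalF d (replicate m (k, True)) \<otimes>\<^bsub>Gd d\<^esub> evalF d [(k, True)]"
    by (simp only: Suc.IH evalF_gen)
  also have "\<dots> = evalF d (replicate m (k, True) @ [(k, True)])"
    using mult_Gd_evalF[of d "replicate m (k, True)" "[(k, True)]"] assms by (simp add: valid_def)
  also have "replicate m (k, True) @ [(k, True)] = replicate (Suc m) (k, True)"
    by (simp add: replicate_append_same)
  finally show ?case .
qed

lemma pow_gen:
  assumes "3 \<le> d" "k \<in> {1..d}"
  shows "gen d k [^]\<^bsub>Gd d\<^esub> (n::int) = evalF d (pw k n)"
proof (cases "n < 0")
  case True
  have "gen d k [^]\<^bsub>Gd d\<^esub> n = inv\<^bsub>Gd d\<^esub> (gen d k [^]\<^bsub>Gd d\<^esub> nat (- n))"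
    using True by (simp only: int_pow_def2 if_True)
  also have "\<dots> = inv\<^bsub>Gd d\<^esub> (evalF d (replicate (nat (- n)) (k, True)))"
    by (simp only: pow_gen_nat[OF assms])
  also have "\<dots> = evalF d (winv (replicate (nat (- n)) (k, True)))"
    by (rule inv_Gd_evalF[OF assms(1)]) (use assms(2) in \<open>simp add: valid_def\<close>)
  also have "\<dots> = evalF d (pw k n)" using True by (simp add: winv_replicate pw_def)
  finally show ?thesis .
next
  case False
  have "gen d k [^]\<^bsub>Gd d\<^esub> n = gen d k [^]\<^bsub>Gd d\<^esub> nat n"
    using False by (simp only: int_pow_def2 if_False)
  also have "\<dots> = evalF d (replicate (nat n) (k, True))"
    by (simp only: pow_gen_nat[OF assms])
  moreover have "pw k n = replicate (nat n) (k, True)" using False by (simp add: pw_def)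
  ultimately show ?thesis by simp
qed

lemma valid_pw: "k \<in> {1..d} \<Longrightarrow> valid d (pw k n)"
  by (simp add: pw_def valid_def)

definition mword :: "nat \<Rightarrow> (nat \<Rightarrow> int) \<Rightarrow> letter list" where
  "mword d e = concat (map (\<lambda>k. pw k (e k)) [1..<d+1])"

lemma foldr_mword:
  assumes "3 \<le> d" "set ks \<subseteq> {1..d}"
  shows "foldr (\<lambda>k acc. (gen d k [^]\<^bsub>Gd d\<^esub> e k) \<otimes>\<^bsub>Gd d\<^esub> acc) ks \<one>\<^bsub>Gd d\<^esub>
       = evalF d (concat (map (\<lambda>k. pw k (e k)) ks))"
  using assms(2)
proof (induction ks)
  case Nil
  then show ?case using evalF_Nil[of d] by simp
next
  case (Cons k ks)
  have k: "k \<in> {1..d}" using Cons.prems by simp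
  have ks: "set ks \<subseteq> {1..d}" using Cons.prems by simp
  have "foldr (\<lambda>k acc. (gen d k [^]\<^bsub>Gd d\<^esub> e k) \<otimes>\<^bsub>Gd d\<^esub> acc) (k # ks) \<one>\<^bsub>Gd d\<^esub>
      = (gen d k [^]\<^bsub>Gd d\<^esub> e k) \<otimes>\<^bsub>Gd d\<^esub> foldr (\<lambda>k acc. (gen d k [^]\<^bsub>Gd d\<^esub> e k) \<otimes>\<^bsub>Gd d\<^esub> acc) ks \<one>\<^bsub>Gd d\<^esub>"
    by (simp only: foldr_Cons comp_apply)
  also have "\<dots> = evalF d (pw k (e k)) \<otimes>\<^bsub>Gd d\<^esub> evalF d (concat (map (\<lambda>k. pw k (e k)) ks))"
    by (simp only: Cons.IH[OF ks] pow_gen[OF assms(1) k])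
  also have "\<dots> = evalF d (concat (map (\<lambda>k. pw k (e k)) (k # ks)))"
    using mult_Gd_evalF assms(1) valid_pw[OF k] by simp
  finally show ?case .
qed

lemma mono_word_eval: "3 \<le> d \<Longrightarrow> mono_word d e = evalF d (mword d e)"
  unfolding mono_word_def mword_def by (rule foldr_mword) auto

lemma valid_mword: "valid d (mword d e)"
  unfolding mword_def valid_def pw_def by auto

lemma cnt_replicate: "cnt (replicate m (k', b)) k = (if k' = k then (if b then int m else - int m) else 0)"
  by (induction m) auto

lemma cnt_pw: "cnt (pw k' n) k = (if k' = k then n else 0)"
  by (simp add: pw_def cnt_replicate)

lemma cnt_concat: "cnt (concat ws) k = sum_list (map (\<lambda>w. cnt w k) ws)"
  by (induction ws) auto

lemma cnt_mword: "k \<in> {1..d} \<Longrightarrow> cnt (mword d e) k = e k"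
proof -
  assume k: "k \<in> {1..d}"
  have "cnt (mword d e) k = sum_list (map (\<lambda>k'. if k' = k then e k' else 0) [1..<d+1])"
    unfolding mword_def cnt_concat by (simp add: cnt_pw comp_def)
  also have "\<dots> = (\<Sum>k'\<in>{1..d}. if k' = k then e k' else 0)"
    by (simp add: sum_list_distinct_conv_sum_set atLeastLessThanSuc_atLeastAtMost)
  also have "\<dots> = e k" using k by simp
  finally show ?thesis .
qed

definition phi :: "nat \<Rightarrow> (nat list \<Rightarrow> nat list) \<Rightarrow> nat \<Rightarrow> int" where
  "phi d g = (\<lambda>k\<in>{1..d}. cnt (SOME w. valid d w \<and> evalF d w = g) k)"

lemma cnt_wd:
  assumes d: "3 \<le> d" "odd d" and v: "valid d w1" "valid d w2" and e: "evalF d w1 = evalF d w2"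
    and k: "k \<in> {1..d}"
  shows "cnt w1 k = cnt w2 k"
proof -
  define W where "W = w1 @ winv w2"
  have vW: "valid d W" using v W_def by simp
  have "Triv d W" unfolding Triv_def
  proof
    fix u assume u: "u \<in> lists {1..d}"
    have "word_act d w1 u = evalF d w1 u" using u by (simp add: evalF_def tv)
    also have "\<dots> = word_act d w2 u" using e u by (simp add: evalF_def tv)
    finally have "word_act d w1 u = word_act d w2 u" .
    then show "word_act d W u = u" unfolding W_def using word_inv1 d v u by simp
  qed
  then have "\<not> nz d W" using triv_zero d vW by blast
  then have "cnt W k = 0" using k by (simp add: nz_def)
  then show ?thesis unfolding W_def by simp
qed

lemma phi_evalF:
  assumes d: "3 \<le> d" "odd d" and v: "valid d w"
  shows "phi d (evalF d w) = (\<lambda>k\<in>{1..d}. cnt w k)"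
proof -
  define w' where "w' = (SOME w'. valid d w' \<and> evalF d w' = evalF d w)"
  have "valid d w' \<and> evalF d w' = evalF d w" unfolding w'_def by (rule someI[of _ w]) (simp add: v)
  then have "\<forall>k\<in>{1..d}. cnt w' k = cnt w k" using cnt_wd d v by blast
  then show ?thesis unfolding phi_def w'_def[symmetric] by (auto intro: restrict_ext)
qed



declare Gd_simps[simp del] AutT_simps[simp del]

abbreviation Zd :: "nat \<Rightarrow> (nat \<Rightarrow> int) monoid" where
  "Zd d \<equiv> product_group {1..d} (\<lambda>_. integer_group)"

lemma group_Zd: "group (Zd d)" by simp

lemma phi_carrier: "phi d g \<in> carrier (Zd d)"
  by (simp add: phi_def)

lemma ex_word: "3 \<le> d \<Longrightarrow> g \<in> carrier (Gd d) \<Longrightarrow> \<exists>w. valid d w \<and> g = evalF d w"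
  using carrier_Gd by blast

lemma phi_hom:
  assumes d: "3 \<le> d" "odd d"
  shows "phi d \<in> hom (Gd d) (Zd d)"
proof (rule homI)
  fix x assume "x \<in> carrier (Gd d)" show "phi d x \<in> carrier (Zd d)" by (rule phi_carrier)
next
  fix x y assume x: "x \<in> carrier (Gd d)" and y: "y \<in> carrier (Gd d)"
  obtain w1 where w1: "valid d w1" "x = evalF d w1" using ex_word d x by blast
  obtain w2 where w2: "valid d w2" "y = evalF d w2" using ex_word d y by blast
  have "x \<otimes>\<^bsub>Gd d\<^esub> y = evalF d (w1 @ w2)" using w1 w2 mult_Gd_evalF d by simp
  then have "phi d (x \<otimes>\<^bsub>Gd d\<^esub> y) = (\<lambda>k\<in>{1..d}. cnt (w1 @ w2) k)"
    using phi_evalF d w1 w2 by simp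
  also have "\<dots> = phi d x \<otimes>\<^bsub>Zd d\<^esub> phi d y"
    using phi_evalF d w1 w2 by (auto intro: restrict_ext)
  finally show "phi d (x \<otimes>\<^bsub>Gd d\<^esub> y) = phi d x \<otimes>\<^bsub>Zd d\<^esub> phi d y" .
qed

lemma phi_group_hom:
  assumes d: "3 \<le> d" "odd d"
  shows "group_hom (Gd d) (Zd d) (phi d)"
  unfolding group_hom_def group_hom_axioms_def using group_Gd d phi_hom group_Zd by blast

lemma phi_mono_word:
  assumes d: "3 \<le> d" "odd d" and e: "e \<in> carrier (Zd d)"
  shows "phi d (mono_word d e) = e"
proof -
  have "phi d (mono_word d e) = (\<lambda>k\<in>{1..d}. cnt (mword d e) k)"
    using mono_word_eval phi_evalF d valid_mword by simp
  also have "\<dots> = (\<lambda>k\<in>{1..d}. e k)" using cnt_mword by (auto intro: restrict_ext)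
  also have "\<dots> = e" using e by (simp add: PiE_restrict)
  finally show ?thesis .
qed

lemma mono_word_carrier: "3 \<le> d \<Longrightarrow> mono_word d e \<in> carrier (Gd d)"
  using mono_word_eval evalF_Gd valid_mword by simp

lemma phi_surj:
  assumes d: "3 \<le> d" "odd d"
  shows "phi d ` carrier (Gd d) = carrier (Zd d)"
proof
  show "phi d ` carrier (Gd d) \<subseteq> carrier (Zd d)" using phi_carrier by blast
  show "carrier (Zd d) \<subseteq> phi d ` carrier (Gd d)"
  proof
    fix e assume e: "e \<in> carrier (Zd d)"
    then have "e = phi d (mono_word d e)" using phi_mono_word d by simp
    then show "e \<in> phi d ` carrier (Gd d)" using mono_word_carrier d by blast
  qed
qed

lemma comm_in_kernel:
  assumes d: "3 \<le> d" "odd d"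
  shows "Gd_comm d \<subseteq> kernel (Gd d) (Zd d) (phi d)"
  unfolding Gd_comm_def derived_def
proof (rule group.generate_subgroup_incl[OF group_Gd[OF d(1)]])
  show "subgroup (kernel (Gd d) (Zd d) (phi d)) (Gd d)"
    using group_hom.subgroup_kernel[OF phi_group_hom[OF d]] .
  show "derived_set (Gd d) (carrier (Gd d)) \<subseteq> kernel (Gd d) (Zd d) (phi d)"
  proof
    fix z assume "z \<in> derived_set (Gd d) (carrier (Gd d))"
    then obtain x y where x: "x \<in> carrier (Gd d)" and y: "y \<in> carrier (Gd d)"
      and z: "z = x \<otimes>\<^bsub>Gd d\<^esub> y \<otimes>\<^bsub>Gd d\<^esub> inv\<^bsub>Gd d\<^esub> x \<otimes>\<^bsub>Gd d\<^esub> inv\<^bsub>Gd d\<^esub> y" by blast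
    obtain w1 where w1: "valid d w1" "x = evalF d w1" using ex_word d x by blast
    obtain w2 where w2: "valid d w2" "y = evalF d w2" using ex_word d y by blast
    have i1: "inv\<^bsub>Gd d\<^esub> x = evalF d (winv w1)" using inv_Gd_evalF[OF d(1) w1(1)] w1(2) by simp
    have i2: "inv\<^bsub>Gd d\<^esub> y = evalF d (winv w2)" using inv_Gd_evalF[OF d(1) w2(1)] w2(2) by simp
    have "z = evalF d w1 \<otimes>\<^bsub>Gd d\<^esub> evalF d w2 \<otimes>\<^bsub>Gd d\<^esub> evalF d (winv w1) \<otimes>\<^bsub>Gd d\<^esub> evalF d (winv w2)"
      using z i1 i2 w1(2) w2(2) by simp
    also have "\<dots> = evalF d (w1 @ w2) \<otimes>\<^bsub>Gd d\<^esub> evalF d (winv w1) \<otimes>\<^bsub>Gd d\<^esub> evalF d (winv w2)"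
      using mult_Gd_evalF[OF d(1) w1(1)] by simp
    also have "\<dots> = evalF d ((w1 @ w2) @ winv w1) \<otimes>\<^bsub>Gd d\<^esub> evalF d (winv w2)"
      using mult_Gd_evalF[OF d(1), of "w1 @ w2"] w1 w2 by simp
    also have "\<dots> = evalF d (((w1 @ w2) @ winv w1) @ winv w2)"
      using mult_Gd_evalF[OF d(1), of "(w1 @ w2) @ winv w1"] w1 w2 by simp
    finally have zw: "z = evalF d (w1 @ w2 @ winv w1 @ winv w2)" by simp
    then have zc: "z \<in> carrier (Gd d)" using evalF_Gd d w1 w2 by simp
    have "phi d z = (\<lambda>k\<in>{1..d}. cnt (w1 @ w2 @ winv w1 @ winv w2) k)"
      using zw phi_evalF d w1 w2 by simp
    also have "\<dots> = (\<lambda>k\<in>{1..d}. (0::int))" by (rule restrict_ext) simp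
    also have "\<dots> = \<one>\<^bsub>Zd d\<^esub>" by simp
    finally show "z \<in> kernel (Gd d) (Zd d) (phi d)" using zc by (simp add: kernel_def)
  qed
qed



abbreviation Qg :: "nat \<Rightarrow> (nat list \<Rightarrow> nat list) set monoid" where
  "Qg d \<equiv> Gd d Mod Gd_comm d"

context
  fixes d :: nat
  assumes d: "3 \<le> d" "odd d"
begin

lemma grp: "group (Gd d)" using group_Gd d by blast

lemma N_normal: "Gd_comm d \<lhd> Gd d"
  unfolding Gd_comm_def by (rule group.derived_self_is_normal[OF grp])

lemma N_sub: "subgroup (Gd_comm d) (Gd d)"
  using N_normal normal_def by blast

lemma group_Q: "group (Gd d Mod Gd_comm d)"
  using normal.factorgroup_is_group[OF N_normal] .

lemma comm_elem: "a \<in> carrier (Gd d) \<Longrightarrow> b \<in> carrier (Gd d) \<Longrightarrow>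
    Gd_comm d #>\<^bsub>Gd d\<^esub> (a \<otimes>\<^bsub>Gd d\<^esub> b) = Gd_comm d #>\<^bsub>Gd d\<^esub> (b \<otimes>\<^bsub>Gd d\<^esub> a)"
proof -
  assume a: "a \<in> carrier (Gd d)" and b: "b \<in> carrier (Gd d)"
  have "(a \<otimes>\<^bsub>Gd d\<^esub> b) \<otimes>\<^bsub>Gd d\<^esub> inv\<^bsub>Gd d\<^esub> (b \<otimes>\<^bsub>Gd d\<^esub> a)
      = a \<otimes>\<^bsub>Gd d\<^esub> b \<otimes>\<^bsub>Gd d\<^esub> inv\<^bsub>Gd d\<^esub> a \<otimes>\<^bsub>Gd d\<^esub> inv\<^bsub>Gd d\<^esub> b"
  proof -
    have "inv\<^bsub>Gd d\<^esub> (b \<otimes>\<^bsub>Gd d\<^esub> a) = inv\<^bsub>Gd d\<^esub> a \<otimes>\<^bsub>Gd d\<^esub> inv\<^bsub>Gd d\<^esub> b"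
      using group.inv_mult_group[OF grp b a] .
    moreover have "(a \<otimes>\<^bsub>Gd d\<^esub> b) \<otimes>\<^bsub>Gd d\<^esub> (inv\<^bsub>Gd d\<^esub> a \<otimes>\<^bsub>Gd d\<^esub> inv\<^bsub>Gd d\<^esub> b)
       = a \<otimes>\<^bsub>Gd d\<^esub> b \<otimes>\<^bsub>Gd d\<^esub> inv\<^bsub>Gd d\<^esub> a \<otimes>\<^bsub>Gd d\<^esub> inv\<^bsub>Gd d\<^esub> b"
      by (rule monoid.m_assoc[OF group.is_monoid[OF grp], symmetric])
        (use a b group.inv_closed[OF grp] monoid.m_closed[OF group.is_monoid[OF grp]] in auto)
    ultimately show ?thesis by simp
  qed
  also have "\<dots> \<in> Gd_comm d" unfolding Gd_comm_def derived_def
    by (rule generate.incl) (use a b in blast)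
  finally have "(a \<otimes>\<^bsub>Gd d\<^esub> b) \<in> Gd_comm d #>\<^bsub>Gd d\<^esub> (b \<otimes>\<^bsub>Gd d\<^esub> a)"
    by (intro subgroup.rcos_module_rev[OF N_sub grp]) (use a b monoid.m_closed[OF group.is_monoid[OF grp]] in auto)
  then show ?thesis using group.repr_independence[OF grp _ _ N_sub] a b by (metis monoid.m_closed[OF group.is_monoid[OF grp]])
qed

lemma comm_Q_aux:
  assumes U: "U \<in> carrier (Qg d)" and V: "V \<in> carrier (Qg d)"
  shows "U \<otimes>\<^bsub>Qg d\<^esub> V = V \<otimes>\<^bsub>Qg d\<^esub> U"
proof -
  obtain a where a: "a \<in> carrier (Gd d)" "U = Gd_comm d #>\<^bsub>Gd d\<^esub> a" using U by (auto simp: carrier_FactGroup)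
  obtain b where b: "b \<in> carrier (Gd d)" "V = Gd_comm d #>\<^bsub>Gd d\<^esub> b" using V by (auto simp: carrier_FactGroup)
  have "U \<otimes>\<^bsub>Qg d\<^esub> V = Gd_comm d #>\<^bsub>Gd d\<^esub> (a \<otimes>\<^bsub>Gd d\<^esub> b)"
    using normal.rcos_sum[OF N_normal a(1) b(1)] a b by simp
  also have "\<dots> = Gd_comm d #>\<^bsub>Gd d\<^esub> (b \<otimes>\<^bsub>Gd d\<^esub> a)" using comm_elem a b by blast
  also have "\<dots> = V \<otimes>\<^bsub>Qg d\<^esub> U"
    using normal.rcos_sum[OF N_normal b(1) a(1)] a b by simp
  finally show ?thesis .
qed

lemma comm_Q: "comm_group (Gd d Mod Gd_comm d)"
  using group.group_comm_groupI[OF group_Q] comm_Q_aux by blast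

lemma pi_hom: "group_hom (Gd d) (Gd d Mod Gd_comm d) (\<lambda>a. Gd_comm d #>\<^bsub>Gd d\<^esub> a)"
  unfolding group_hom_def group_hom_axioms_def
  using grp group_Q normal.r_coset_hom_Mod[OF N_normal] by blast

end



context
  fixes d :: nat
  assumes d: "3 \<le> d" "odd d"
begin

interpretation G: group "Gd d" using group_Gd d by blast
interpretation Q: comm_group "Qg d" using comm_Q d by blast
interpretation pi: group_hom "Gd d" "Qg d" "\<lambda>a. Gd_comm d #>\<^bsub>Gd d\<^esub> a" using pi_hom d by blast

definition Ag :: "nat \<Rightarrow> (nat list \<Rightarrow> nat list) set" where
  "Ag k = Gd_comm d #>\<^bsub>Gd d\<^esub> gen d k"

lemma gen_carrier: "k \<in> {1..d} \<Longrightarrow> gen d k \<in> carrier (Gd d)"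
  using evalF_Gd[of d "[(k, True)]"] d evalF_gen by (simp add: valid_def)

lemma Ag_carrier: "k \<in> {1..d} \<Longrightarrow> Ag k \<in> carrier (Qg d)"
  unfolding Ag_def using gen_carrier pi.hom_closed by blast

lemma pi_letter:
  assumes j: "j \<in> {1..d}"
  shows "Gd_comm d #>\<^bsub>Gd d\<^esub> evalF d [(j, b)] = Ag j [^]\<^bsub>Qg d\<^esub> (if b then 1 else -1 :: int)"
proof (cases b)
  case True
  then show ?thesis using Ag_carrier[OF j] by (simp add: evalF_gen Ag_def)
next
  case False
  have "evalF d [(j, False)] = inv\<^bsub>Gd d\<^esub> (gen d j)"
    using inv_Gd_evalF[of d "[(j, True)]"] d j evalF_gen by (simp add: valid_def)
  then have "Gd_comm d #>\<^bsub>Gd d\<^esub> evalF d [(j, False)] = inv\<^bsub>Qg d\<^esub> (Ag j)"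
    using pi.hom_inv gen_carrier[OF j] Ag_def by simp
  also have "\<dots> = Ag j [^]\<^bsub>Qg d\<^esub> (-1 :: int)"
    using Q.int_pow_neg[OF Ag_carrier[OF j], of 1] Ag_carrier[OF j] by simp
  finally show ?thesis using False by simp
qed

lemma W:
  assumes "valid d w"
  shows "Gd_comm d #>\<^bsub>Gd d\<^esub> evalF d w = finprod (Qg d) (\<lambda>k. Ag k [^]\<^bsub>Qg d\<^esub> cnt w k) {1..d}"
  using assms
proof (induction w)
  case Nil
  have "Gd_comm d #>\<^bsub>Gd d\<^esub> evalF d [] = \<one>\<^bsub>Qg d\<^esub>" using pi.hom_one one_Gd by metis
  moreover have "finprod (Qg d) (\<lambda>k. Ag k [^]\<^bsub>Qg d\<^esub> cnt [] k) {1..d} = \<one>\<^bsub>Qg d\<^esub>"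
    by (simp add: Q.finprod_one_eqI)
  ultimately show ?case by simp
next
  case (Cons l w)
  obtain j b where l: "l = (j, b)" by (cases l)
  have j: "j \<in> {1..d}" using Cons.prems l by simp
  define s :: int where "s = (if b then 1 else -1)"
  have vw: "valid d w" using Cons.prems by simp
  have "evalF d (l # w) = evalF d [l] \<otimes>\<^bsub>Gd d\<^esub> evalF d w"
    using mult_Gd_evalF[of d "[l]" w] d j l by (simp add: valid_def)
  then have "Gd_comm d #>\<^bsub>Gd d\<^esub> evalF d (l # w)
      = (Gd_comm d #>\<^bsub>Gd d\<^esub> evalF d [l]) \<otimes>\<^bsub>Qg d\<^esub> (Gd_comm d #>\<^bsub>Gd d\<^esub> evalF d w)"
    using pi.hom_mult evalF_Gd d Cons.prems j l by (simp add: valid_def)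
  also have "\<dots> = (Ag j [^]\<^bsub>Qg d\<^esub> s) \<otimes>\<^bsub>Qg d\<^esub> finprod (Qg d) (\<lambda>k. Ag k [^]\<^bsub>Qg d\<^esub> cnt w k) {1..d}"
    using pi_letter[OF j] Cons.IH[OF vw] l s_def by simp
  also have "Ag j [^]\<^bsub>Qg d\<^esub> s = finprod (Qg d) (\<lambda>k. if j = k then Ag k [^]\<^bsub>Qg d\<^esub> s else \<one>\<^bsub>Qg d\<^esub>) {1..d}"
    using Q.finprod_singleton[of j "{1..d}" "\<lambda>k. Ag k [^]\<^bsub>Qg d\<^esub> s"] j Ag_carrier by auto
  also have "finprod (Qg d) (\<lambda>k. if j = k then Ag k [^]\<^bsub>Qg d\<^esub> s else \<one>\<^bsub>Qg d\<^esub>) {1..d}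
      \<otimes>\<^bsub>Qg d\<^esub> finprod (Qg d) (\<lambda>k. Ag k [^]\<^bsub>Qg d\<^esub> cnt w k) {1..d}
      = finprod (Qg d) (\<lambda>k. (if j = k then Ag k [^]\<^bsub>Qg d\<^esub> s else \<one>\<^bsub>Qg d\<^esub>) \<otimes>\<^bsub>Qg d\<^esub> Ag k [^]\<^bsub>Qg d\<^esub> cnt w k) {1..d}"
    by (rule Q.finprod_multf[symmetric]) (use Q.one_closed in \<open>auto simp: Ag_carrier\<close>)
  also have "\<dots> = finprod (Qg d) (\<lambda>k. Ag k [^]\<^bsub>Qg d\<^esub> cnt (l # w) k) {1..d}"
  proof (rule Q.finprod_cong')
    show "(\<lambda>k. Ag k [^]\<^bsub>Qg d\<^esub> cnt (l # w) k) \<in> {1..d} \<rightarrow> carrier (Qg d)"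
      using Ag_carrier by auto
    fix k assume k: "k \<in> {1..d}"
    have "cnt (l # w) k = (if j = k then s else 0) + cnt w k" using l s_def by simp
    then have "Ag k [^]\<^bsub>Qg d\<^esub> cnt (l # w) k = Ag k [^]\<^bsub>Qg d\<^esub> (if j = k then s else 0) \<otimes>\<^bsub>Qg d\<^esub> Ag k [^]\<^bsub>Qg d\<^esub> cnt w k"
      using Q.int_pow_mult[OF Ag_carrier[OF k]] by simp
    then show "(if j = k then Ag k [^]\<^bsub>Qg d\<^esub> s else \<one>\<^bsub>Qg d\<^esub>) \<otimes>\<^bsub>Qg d\<^esub> Ag k [^]\<^bsub>Qg d\<^esub> cnt w k
        = Ag k [^]\<^bsub>Qg d\<^esub> cnt (l # w) k" by simp
  qed simp
  finally show ?case .
qed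


lemma cos_eq:
  assumes "valid d w1" "valid d w2" "\<forall>k\<in>{1..d}. cnt w1 k = cnt w2 k"
  shows "Gd_comm d #>\<^bsub>Gd d\<^esub> evalF d w1 = Gd_comm d #>\<^bsub>Gd d\<^esub> evalF d w2"
proof -
  have "finprod (Qg d) (\<lambda>k. Ag k [^]\<^bsub>Qg d\<^esub> cnt w1 k) {1..d} = finprod (Qg d) (\<lambda>k. Ag k [^]\<^bsub>Qg d\<^esub> cnt w2 k) {1..d}"
    by (rule Q.finprod_cong') (use assms Ag_carrier in auto)
  then show ?thesis using W assms by simp
qed

lemma N_subset: "Gd_comm d \<subseteq> carrier (Gd d)"
  using subgroup.subset[OF N_sub[OF d]] .

lemma in_own_coset: "g \<in> carrier (Gd d) \<Longrightarrow> g \<in> Gd_comm d #>\<^bsub>Gd d\<^esub> g"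
  using G.rcos_self N_sub[OF d] by blast

lemma kernel_eq: "kernel (Gd d) (Zd d) (phi d) = Gd_comm d"
proof
  show "Gd_comm d \<subseteq> kernel (Gd d) (Zd d) (phi d)" using comm_in_kernel d by blast
  show "kernel (Gd d) (Zd d) (phi d) \<subseteq> Gd_comm d"
  proof
    fix g assume g: "g \<in> kernel (Gd d) (Zd d) (phi d)"
    then have gc: "g \<in> carrier (Gd d)" and pg: "phi d g = \<one>\<^bsub>Zd d\<^esub>" by (auto simp: kernel_def)
    obtain w where w: "valid d w" "g = evalF d w" using ex_word d gc by blast
    have p1: "phi d g = (\<lambda>k\<in>{1..d}. cnt w k)" using phi_evalF[OF d w(1)] w(2) by simp
    have p2: "\<one>\<^bsub>Zd d\<^esub> = (\<lambda>k\<in>{1..d}. (0::int))" by simp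
    have eqf: "(\<lambda>k\<in>{1..d}. cnt w k) = (\<lambda>k\<in>{1..d}. (0::int))" using pg p1 p2 by simp
    have "\<forall>k\<in>{1..d}. cnt w k = cnt [] k"
    proof
      fix k :: nat assume k: "k \<in> {1..d}"
      have "(\<lambda>k\<in>{1..d}. cnt w k) k = (\<lambda>k\<in>{1..d}. (0::int)) k" using eqf by (rule fun_cong)
      then show "cnt w k = cnt [] k" using k by simp
    qed
    then have "Gd_comm d #>\<^bsub>Gd d\<^esub> evalF d w = Gd_comm d #>\<^bsub>Gd d\<^esub> evalF d []"
      using cos_eq[OF w(1) valid_Nil] by blast
    then have "Gd_comm d #>\<^bsub>Gd d\<^esub> g = Gd_comm d #>\<^bsub>Gd d\<^esub> evalF d []" using w(2) by simp
    also have "\<dots> = Gd_comm d" using G.coset_mult_one[OF N_subset] one_Gd by metis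
    finally show "g \<in> Gd_comm d" using in_own_coset[OF gc] by simp
  qed
qed

lemma complete:
  assumes g: "g \<in> carrier (Gd d)"
  shows "\<exists>e \<in> {1..d} \<rightarrow>\<^sub>E (UNIV :: int set). g \<in> Gd_comm d #>\<^bsub>Gd d\<^esub> mono_word d e"
proof -
  obtain w where w: "valid d w" "g = evalF d w" using ex_word d g by blast
  define e where "e = phi d g"
  have e: "e \<in> {1..d} \<rightarrow>\<^sub>E (UNIV :: int set)" using phi_carrier[of d g] unfolding e_def by simp
  have ee: "e = (\<lambda>k\<in>{1..d}. cnt w k)" unfolding e_def using phi_evalF[OF d w(1)] w(2) by simp
  have "\<forall>k\<in>{1..d}. cnt w k = cnt (mword d e) k"
  proof
    fix k :: nat assume k: "k \<in> {1..d}"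
    have "cnt (mword d e) k = e k" by (rule cnt_mword[OF k])
    also have "\<dots> = cnt w k" using ee k by simp
    finally show "cnt w k = cnt (mword d e) k" by simp
  qed
  then have "Gd_comm d #>\<^bsub>Gd d\<^esub> evalF d w = Gd_comm d #>\<^bsub>Gd d\<^esub> evalF d (mword d e)"
    using cos_eq[OF w(1) valid_mword] by blast
  then have "Gd_comm d #>\<^bsub>Gd d\<^esub> g = Gd_comm d #>\<^bsub>Gd d\<^esub> mono_word d e"
    using w(2) mono_word_eval[OF d(1)] by simp
  then have "g \<in> Gd_comm d #>\<^bsub>Gd d\<^esub> mono_word d e" using in_own_coset[OF g] by simp
  then show ?thesis using e by blast
qed

lemma distinct:
  assumes e: "e \<in> {1..d} \<rightarrow>\<^sub>E (UNIV :: int set)" and e': "e' \<in> {1..d} \<rightarrow>\<^sub>E (UNIV :: int set)"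
    and eq: "Gd_comm d #>\<^bsub>Gd d\<^esub> mono_word d e = Gd_comm d #>\<^bsub>Gd d\<^esub> mono_word d e'"
  shows "e = e'"
proof -
  have mc: "mono_word d e \<in> carrier (Gd d)" "mono_word d e' \<in> carrier (Gd d)"
    using mono_word_carrier d by auto
  have "mono_word d e \<in> Gd_comm d #>\<^bsub>Gd d\<^esub> mono_word d e'" using in_own_coset[OF mc(1)] eq by simp
  then obtain n where n: "n \<in> Gd_comm d" "mono_word d e = n \<otimes>\<^bsub>Gd d\<^esub> mono_word d e'"
    unfolding r_coset_def by blast
  have nc: "n \<in> carrier (Gd d)" using n N_subset by blast
  have nk: "phi d n = \<one>\<^bsub>Zd d\<^esub>" using n comm_in_kernel d by (auto simp: kernel_def)
  have "phi d (mono_word d e) = phi d (n \<otimes>\<^bsub>Gd d\<^esub> mono_word d e')" using n(2) by simp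
  also have "\<dots> = phi d n \<otimes>\<^bsub>Zd d\<^esub> phi d (mono_word d e')"
    by (rule group_hom.hom_mult[OF phi_group_hom[OF d] nc mc(2)])
  also have "\<dots> = \<one>\<^bsub>Zd d\<^esub> \<otimes>\<^bsub>Zd d\<^esub> phi d (mono_word d e')" by (simp only: nk)
  also have "\<dots> = phi d (mono_word d e')"
    by (rule monoid.l_one[OF group.is_monoid[OF group_Zd] phi_carrier])
  finally have "phi d (mono_word d e) = phi d (mono_word d e')" .
  moreover have "phi d (mono_word d e) = e" using phi_mono_word[OF d] e by simp
  moreover have "phi d (mono_word d e') = e'" using phi_mono_word[OF d] e' by simp
  ultimately show ?thesis by simp
qed

lemma iso: "(Gd d Mod Gd_comm d) \<cong> Zd d"
proof -
  have "(Gd d Mod kernel (Gd d) (Zd d) (phi d)) \<cong> Zd d"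
    by (rule group_hom.FactGroup_iso[OF phi_group_hom[OF d] phi_surj[OF d]])
  then show ?thesis by (simp only: kernel_eq)
qed

end

theorem theorem4p3:
  fixes d :: nat
  assumes "d \<ge> 3" and "odd d"
  shows "(Gd d Mod Gd_comm d) \<cong> product_group {1..d} (\<lambda>_. integer_group)
    \<and> (\<forall>e \<in> {1..d} \<rightarrow>\<^sub>E (UNIV :: int set). mono_word d e \<in> carrier (Gd d))
    \<and> (\<forall>e \<in> {1..d} \<rightarrow>\<^sub>E (UNIV :: int set). \<forall>e' \<in> {1..d} \<rightarrow>\<^sub>E (UNIV :: int set).
         Gd_comm d #>\<^bsub>Gd d\<^esub> mono_word d e = Gd_comm d #>\<^bsub>Gd d\<^esub> mono_word d e' \<longrightarrow> e = e')
    \<and> (\<forall>g \<in> carrier (Gd d). \<exists>e \<in> {1..d} \<rightarrow>\<^sub>E (UNIV :: int set).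
         g \<in> Gd_comm d #>\<^bsub>Gd d\<^esub> mono_word d e)"
  using iso[OF assms] mono_word_carrier[OF assms(1)] distinct[OF assms] complete[OF assms] by blast


end
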